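(* Let $b\ge2$, $m\ge3$. For $x\ge0$ and $n\in\mathbb{N}$ define $F_n^{(x)}:\mathbb{R}^{m-2}\to\mathbb{R}^{m-2}$ by $F_n^{(x)}(\mathbf{y})=\vec P_m\big(M_b^{-n}(x),\mathbf{y}\big)$. Then: (i) There is $\epsilon>0$ such that for all $x\ge0$ and all $\mathbf{y}$ with $\|\mathbf{y}\|_\infty\le\epsilon$ the limit $$\lim_{n\to\infty}F_1^{(x)}\circ\cdots\circ F_n^{(x)}(\mathbf{y})=\big(H_3(x),\dots,H_m(x)\big)=:\vec H_m(x)$$ exists and is independent of $\mathbf{y}$; the convergence is uniform over $\|\mathbf{y}\|_\infty\le\epsilon$ and $x$ in any bounded subset of $[0,\infty)$. (ii) $H_m$ is nonnegative and increasing on $[0,\infty)$, $H_m(0)=0$, and $H_m(x)\to\infty$ as $x\to\infty$. (iii) $\vec H_m(M_b(x))=\vec P_m\big(x,\vec H_m(x)\big)$ for all $x\ge0$. (iv) $\vec H_m$ is differentiable and $$\frac{d}{dx}\vec H_m(x)=\sum_{k=1}^\infty\Big(\prod_{j=1}^{k-1}(\widetilde{\mathbf D}\vec P_m)\big(M_b^{-j}(x),\vec H_m(M_b^{-j}(x))\big)\Big)(\partial_1\vec P_m)\big(M_b^{-k}(x),\vec H_m(M_b^{-k}(x))\big)\frac{d}{dx}M_b^{-k}(x),$$ where $\prod_{j=1}^{n}A_j$ means $A_1A_2\cdots A_n$; the series converges uniformly for $x$ in bounded subsets of $[0,\infty)$. (v) With $\epsilon$ as in (i), $\lim_{n\to\infty}\frac{d}{dx}F_1^{(x)}\circ\cdots\circ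 F_n^{(x)}(\mathbf{y})=\frac{d}{dx}\vec H_m(x)$ uniformly over $\|\mathbf{y}\|_\infty\le\epsilon$ and $x$ in any bounded subset of $[0,\infty)$.
   Context: $M_b(x)=\frac1b[(1+x)^b-1]$ is an increasing bijection of $[0,\infty)$; $M_b^{-1}$ is its inverse and $M_b^{-n}$ the $n$-fold composition of $M_b^{-1}$. For $k\ge2$, $P_k(y_2,\dots,y_k)$ is the polynomial defined as follows: for i.i.d. mean-zero random variables $R_{i,j}$ ($1\le i,j\le b$) with moments $\mu_\ell=\mathbb{E}[R_{i,j}^\ell]$, expanding $\mathbb{E}\big[\big(\frac1b\sum_{i=1}^b(\prod_{j=1}^b(1+R_{i,j})-1)\big)^k\big]$ gives a polynomial in $\mu_2,\dots,\mu_k$, and $P_k$ is this polynomial with $\mu_\ell$ replaced by $y_\ell$. For $x\in\mathbb{R}$ and $\mathbf{y}=(y_3,\dots,y_m)$, set $\vec P_m(x,\mathbf{y})=\big(P_3(x,y_3),P_4(x,y_3,y_4),\dots,P_m(x,y_3,\dots,y_m)\big)$ (i.e. $P_k$ evaluated with $y_2=x$). $(\widetilde{\mathbf D}\vec P_m)(x,\mathbf{y})$ is the $(m-2)\times(m-2)$ matrix with entries $\frac{\partial}{\partial y_j}P_i(x,\mathbf{y})$, $i,j\in\{3,\dots,m\}$, and $(\partial_1\vec P_m)(x,\mathbf{y})$ is the vector of partial derivatives with respect to $x$. $\|\mathbf{y}\|_\infty=\max_i|y_i|$. *)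

theory Defs
  imports "HOL-Analysis.Analysis"
begin

definition Mb :: "nat \<Rightarrow> real \<Rightarrow> real" where
  "Mb b x = ((1 + x) ^ b - 1) / real b"

text \<open>The inverse of M_b on [0,inf), written out: M_b^{-1}(y) = (1 + b y)^(1/b) - 1
  (smooth for y > -1/b, so two-sided derivatives at 0 make sense).\<close>
definition Mb_inv :: "nat \<Rightarrow> real \<Rightarrow> real" where
  "Mb_inv b y = (1 + real b * y) powr (1 / real b) - 1"

definition Mb_inv_pow :: "nat \<Rightarrow> nat \<Rightarrow> real \<Rightarrow> real" where
  "Mb_inv_pow b n = (Mb_inv b ^^ n)"

text \<open>Moments: mu_0 = 1, mu_1 = 0 (mean zero), mu_l = y l for l \<ge> 2.\<close>
definition mom :: "(nat \<Rightarrow> real) \<Rightarrow> nat \<Rightarrow> real" where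
  "mom y l = (if l = 0 then 1 else if l = 1 then 0 else y l)"

text \<open>P_k(y_2,...,y_k): full expansion of
  E[((1/b) sum_i (prod_j (1+R_ij) - 1))^k] for i.i.d. mean-zero R_ij with moments y_l.
  Using prod_j(1+R_ij) - 1 = sum over nonempty S of prod_{j in S} R_ij, the k-th power
  expands as a sum over row choices r : [k] -> [b] and nonempty column sets S : [k] -> P([b]);
  by independence the expectation of each term is prod_{(a,c)} mu_{#{t. r t = a, c in S t}}.\<close>
definition P :: "nat \<Rightarrow> nat \<Rightarrow> (nat \<Rightarrow> real) \<Rightarrow> real" where
  "P b k y = (1 / real b ^ k) *
     (\<Sum>r \<in> {..<k} \<rightarrow>\<^sub>E {..<b}. \<Sum>S \<in> {..<k} \<rightarrow>\<^sub>E (Pow {..<b} - {{}}).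
        \<Prod>a\<in>{..<b}. \<Prod>c\<in>{..<b}. mom y (card {t\<in>{..<k}. r t = a \<and> c \<in> S t}))"

text \<open>Vectors y = (y_3,...,y_m) are functions nat => real; only indices 3..m are relevant.
  vec P_m(x,y): component k (3 \<le> k \<le> m) is P_k with y_2 := x; other components 0.\<close>
definition Pvec :: "nat \<Rightarrow> nat \<Rightarrow> real \<Rightarrow> (nat \<Rightarrow> real) \<Rightarrow> (nat \<Rightarrow> real)" where
  "Pvec b m x y = (\<lambda>i. if 3 \<le> i \<and> i \<le> m then P b i (y(2 := x)) else 0)"

definition Fmap :: "nat \<Rightarrow> nat \<Rightarrow> real \<Rightarrow> nat \<Rightarrow> (nat \<Rightarrow> real) \<Rightarrow> (nat \<Rightarrow> real)" where
  "Fmap b m x n y = Pvec b m (Mb_inv_pow b n x) y"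

definition Fcomp :: "nat \<Rightarrow> nat \<Rightarrow> real \<Rightarrow> nat \<Rightarrow> (nat \<Rightarrow> real) \<Rightarrow> (nat \<Rightarrow> real)" where
  "Fcomp b m x n y = foldr (\<lambda>k w. Fmap b m x k w) [1..<Suc n] y"

definition DP :: "nat \<Rightarrow> nat \<Rightarrow> real \<Rightarrow> (nat \<Rightarrow> real) \<Rightarrow> nat \<Rightarrow> nat \<Rightarrow> real" where
  "DP b m x y i j = deriv (\<lambda>t. Pvec b m x (y(j := t)) i) (y j)"

definition d1P :: "nat \<Rightarrow> nat \<Rightarrow> real \<Rightarrow> (nat \<Rightarrow> real) \<Rightarrow> nat \<Rightarrow> real" where
  "d1P b m x y i = deriv (\<lambda>t. Pvec b m t y i) x"

definition matvec :: "nat \<Rightarrow> (nat \<Rightarrow> nat \<Rightarrow> real) \<Rightarrow> (nat \<Rightarrow> real) \<Rightarrow> (nat \<Rightarrow> real)" where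
  "matvec m A v = (\<lambda>i. \<Sum>j\<in>{3..m}. A i j * v j)"

definition series_term :: "nat \<Rightarrow> nat \<Rightarrow> (real \<Rightarrow> nat \<Rightarrow> real) \<Rightarrow> nat \<Rightarrow> real \<Rightarrow> nat \<Rightarrow> real" where
  "series_term b m H k x =
     (\<lambda>i. foldr (\<lambda>j w. matvec m (DP b m (Mb_inv_pow b j x) (H (Mb_inv_pow b j x))) w) [1..<k]
            (d1P b m (Mb_inv_pow b k x) (H (Mb_inv_pow b k x))) i
          * deriv (Mb_inv_pow b k) x)"

end

theory Submission
  imports Defs
begin

inductive pf :: "nat set \<Rightarrow> ((nat \<Rightarrow> real) \<Rightarrow> real) \<Rightarrow> bool" for V where
  pf_const: "pf V (\<lambda>z. c)"
| pf_var: "l \<in> V \<Longrightarrow> pf V (\<lambda>z. z l)"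
| pf_add: "pf V f \<Longrightarrow> pf V g \<Longrightarrow> pf V (\<lambda>z. f z + g z)"
| pf_mult: "pf V f \<Longrightarrow> pf V g \<Longrightarrow> pf V (\<lambda>z. f z * g z)"

lemma pf_sum: "finite A \<Longrightarrow> (\<And>a. a \<in> A \<Longrightarrow> pf V (f a)) \<Longrightarrow> pf V (\<lambda>z. \<Sum>a\<in>A. f a z)"
proof (induction A rule: finite_induct)
  case empty then show ?case using pf_const[of V 0] by simp
next
  case (insert x F) then show ?case by (simp add: pf_add)
qed

lemma pf_prod: "finite A \<Longrightarrow> (\<And>a. a \<in> A \<Longrightarrow> pf V (f a)) \<Longrightarrow> pf V (\<lambda>z. \<Prod>a\<in>A. f a z)"
proof (induction A rule: finite_induct)
  case empty then show ?case using pf_const[of V 1] by simp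
next
  case (insert x F) then show ?case by (simp add: pf_mult)
qed

lemma pf_tendsto:
  assumes "pf V f" "\<And>l. l \<in> V \<Longrightarrow> ((\<lambda>n. Z n l) \<longlongrightarrow> z l) F"
  shows "((\<lambda>n. f (Z n)) \<longlongrightarrow> f z) F"
  using assms by (induction rule: pf.induct) (auto intro!: tendsto_intros)

lemma pf_lip:
  assumes "pf V f"
  shows "\<exists>C L. C \<ge> 0 \<and> L \<ge> 0 \<and> (\<forall>z z' d. (\<forall>l\<in>V. \<bar>z l\<bar> \<le> K) \<longrightarrow> (\<forall>l\<in>V. \<bar>z' l\<bar> \<le> K)
     \<longrightarrow> (\<forall>l\<in>V. \<bar>z l - z' l\<bar> \<le> d) \<longrightarrow> \<bar>f z\<bar> \<le> C \<and> \<bar>f z - f z'\<bar> \<le> L * d)"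
  using assms
proof (induction rule: pf.induct)
  case (pf_const c)
  then show ?case by (intro exI[of _ "\<bar>c\<bar>"] exI[of _ 0]) auto
next
  case (pf_var l)
  then show ?case by (intro exI[of _ "\<bar>K\<bar>"] exI[of _ 1]) auto
next
  case (pf_add f g)
  then obtain C1 L1 C2 L2 where A: "C1 \<ge> 0" "L1 \<ge> 0" "C2 \<ge> 0" "L2 \<ge> 0"
    "\<forall>z z' d. (\<forall>l\<in>V. \<bar>z l\<bar> \<le> K) \<longrightarrow> (\<forall>l\<in>V. \<bar>z' l\<bar> \<le> K)
     \<longrightarrow> (\<forall>l\<in>V. \<bar>z l - z' l\<bar> \<le> d) \<longrightarrow> \<bar>f z\<bar> \<le> C1 \<and> \<bar>f z - f z'\<bar> \<le> L1 * d"
    "\<forall>z z' d. (\<forall>l\<in>V. \<bar>z l\<bar> \<le> K) \<longrightarrow> (\<forall>l\<in>V. \<bar>z' l\<bar> \<le> K)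
     \<longrightarrow> (\<forall>l\<in>V. \<bar>z l - z' l\<bar> \<le> d) \<longrightarrow> \<bar>g z\<bar> \<le> C2 \<and> \<bar>g z - g z'\<bar> \<le> L2 * d"
    by blast
  have "\<forall>z z' d. (\<forall>l\<in>V. \<bar>z l\<bar> \<le> K) \<longrightarrow> (\<forall>l\<in>V. \<bar>z' l\<bar> \<le> K)
     \<longrightarrow> (\<forall>l\<in>V. \<bar>z l - z' l\<bar> \<le> d) \<longrightarrow> \<bar>f z + g z\<bar> \<le> C1 + C2 \<and> \<bar>f z + g z - (f z' + g z')\<bar> \<le> (L1 + L2) * d"
  proof (intro allI impI)
    fix z z' d assume h: "\<forall>l\<in>V. \<bar>z l\<bar> \<le> K" "\<forall>l\<in>V. \<bar>z' l\<bar> \<le> K" "\<forall>l\<in>V. \<bar>z l - z' l\<bar> \<le> d"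
    have "\<bar>f z\<bar> \<le> C1 \<and> \<bar>f z - f z'\<bar> \<le> L1 * d" "\<bar>g z\<bar> \<le> C2 \<and> \<bar>g z - g z'\<bar> \<le> L2 * d"
      using A(5,6) h by blast+
    then show "\<bar>f z + g z\<bar> \<le> C1 + C2 \<and> \<bar>f z + g z - (f z' + g z')\<bar> \<le> (L1 + L2) * d"
      by (auto simp: algebra_simps intro: order_trans[OF abs_triangle_ineq] add_mono)
  qed
  then show ?case using A(1-4) by (intro exI[of _ "C1 + C2"] exI[of _ "L1 + L2"]) auto
next
  case (pf_mult f g)
  then obtain C1 L1 C2 L2 where A: "C1 \<ge> 0" "L1 \<ge> 0" "C2 \<ge> 0" "L2 \<ge> 0"
    "\<forall>z z' d. (\<forall>l\<in>V. \<bar>z l\<bar> \<le> K) \<longrightarrow> (\<forall>l\<in>V. \<bar>z' l\<bar> \<le> K)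
     \<longrightarrow> (\<forall>l\<in>V. \<bar>z l - z' l\<bar> \<le> d) \<longrightarrow> \<bar>f z\<bar> \<le> C1 \<and> \<bar>f z - f z'\<bar> \<le> L1 * d"
    "\<forall>z z' d. (\<forall>l\<in>V. \<bar>z l\<bar> \<le> K) \<longrightarrow> (\<forall>l\<in>V. \<bar>z' l\<bar> \<le> K)
     \<longrightarrow> (\<forall>l\<in>V. \<bar>z l - z' l\<bar> \<le> d) \<longrightarrow> \<bar>g z\<bar> \<le> C2 \<and> \<bar>g z - g z'\<bar> \<le> L2 * d"
    by blast
  have "\<forall>z z' d. (\<forall>l\<in>V. \<bar>z l\<bar> \<le> K) \<longrightarrow> (\<forall>l\<in>V. \<bar>z' l\<bar> \<le> K)
     \<longrightarrow> (\<forall>l\<in>V. \<bar>z l - z' l\<bar> \<le> d) \<longrightarrow> \<bar>f z * g z\<bar> \<le> C1 * C2 \<and> \<bar>f z * g z - f z' * g z'\<bar> \<le> (C1 * L2 + C2 * L1) * d"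
  proof (intro allI impI conjI)
    fix z z' d assume h: "\<forall>l\<in>V. \<bar>z l\<bar> \<le> K" "\<forall>l\<in>V. \<bar>z' l\<bar> \<le> K" "\<forall>l\<in>V. \<bar>z l - z' l\<bar> \<le> d"
    have h': "\<forall>l\<in>V. \<bar>z' l - z l\<bar> \<le> d" using h(3) by (simp add: abs_minus_commute)
    have f1: "\<bar>f z\<bar> \<le> C1 \<and> \<bar>f z - f z'\<bar> \<le> L1 * d" and g1: "\<bar>g z\<bar> \<le> C2 \<and> \<bar>g z - g z'\<bar> \<le> L2 * d"
      using A(5,6) h by blast+
    have g2: "\<bar>g z'\<bar> \<le> C2" using A(6) h(2,1) h' by blast
    show "\<bar>f z * g z\<bar> \<le> C1 * C2" using f1 g1 A(1) unfolding abs_mult by (intro mult_mono) auto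
    have "\<bar>f z * g z - f z' * g z'\<bar> = \<bar>f z * (g z - g z') + g z' * (f z - f z')\<bar>"
      by (simp add: algebra_simps)
    also have "\<dots> \<le> \<bar>f z\<bar> * \<bar>g z - g z'\<bar> + \<bar>g z'\<bar> * \<bar>f z - f z'\<bar>"
      by (metis abs_mult abs_triangle_ineq)
    also have "\<dots> \<le> C1 * (L2 * d) + C2 * (L1 * d)"
      using f1 g1 g2 A(1,3)
      by (intro add_mono mult_mono) auto
    finally show "\<bar>f z * g z - f z' * g z'\<bar> \<le> (C1 * L2 + C2 * L1) * d"
      by (simp add: algebra_simps)
  qed
  then show ?case using A(1-4) by (intro exI[of _ "C1 * C2"] exI[of _ "C1 * L2 + C2 * L1"]) auto
qed

lemma pf_chain:
  assumes "pf V f" "finite V"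
  shows "\<exists>D. (\<forall>l. pf V (D l)) \<and> (\<forall>Z Z' x S. (\<forall>l\<in>V. ((\<lambda>s. Z s l) has_real_derivative Z' l) (at x within S))
     \<longrightarrow> ((\<lambda>s. f (Z s)) has_real_derivative (\<Sum>l\<in>V. D l (Z x) * Z' l)) (at x within S))"
  using assms(1)
proof (induction rule: pf.induct)
  case (pf_const c)
  then show ?case by (intro exI[of _ "\<lambda>l z. 0"]) (auto intro: pf.pf_const)
next
  case (pf_var l)
  show ?case
  proof (intro exI[of _ "\<lambda>l' z. if l' = l then 1 else 0"] conjI allI impI)
    fix l' show "pf V (\<lambda>z. if l' = l then 1 else 0)" by (rule pf.pf_const)
  next
    fix Z Z' x S assume h: "\<forall>l\<in>V. ((\<lambda>s. Z s l) has_real_derivative Z' l) (at x within S)"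
    have "(\<Sum>l'\<in>V. (if l' = l then 1 else 0) * Z' l') = (\<Sum>l'\<in>V. (if l' = l then Z' l else 0))"
      by (intro sum.cong) auto
    also have "\<dots> = Z' l" using pf_var assms(2) by simp
    finally show "((\<lambda>s. Z s l) has_real_derivative (\<Sum>l'\<in>V. (if l' = l then 1 else 0) * Z' l')) (at x within S)"
      using h pf_var by simp
  qed
next
  case (pf_add f g)
  then obtain D1 D2 where A: "\<forall>l. pf V (D1 l)" "\<forall>l. pf V (D2 l)"
    "\<forall>Z Z' x S. (\<forall>l\<in>V. ((\<lambda>s. Z s l) has_real_derivative Z' l) (at x within S))
     \<longrightarrow> ((\<lambda>s. f (Z s)) has_real_derivative (\<Sum>l\<in>V. D1 l (Z x) * Z' l)) (at x within S)"
    "\<forall>Z Z' x S. (\<forall>l\<in>V. ((\<lambda>s. Z s l) has_real_derivative Z' l) (at x within S))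
     \<longrightarrow> ((\<lambda>s. g (Z s)) has_real_derivative (\<Sum>l\<in>V. D2 l (Z x) * Z' l)) (at x within S)"
    by blast
  show ?case
  proof (intro exI[of _ "\<lambda>l z. D1 l z + D2 l z"] conjI allI impI)
    fix l show "pf V (\<lambda>z. D1 l z + D2 l z)" using A by (simp add: pf.pf_add)
  next
    fix Z Z' x S assume h: "\<forall>l\<in>V. ((\<lambda>s. Z s l) has_real_derivative Z' l) (at x within S)"
    have "((\<lambda>s. f (Z s) + g (Z s)) has_real_derivative
       (\<Sum>l\<in>V. D1 l (Z x) * Z' l) + (\<Sum>l\<in>V. D2 l (Z x) * Z' l)) (at x within S)"
      using A(3,4) h by (intro derivative_intros) auto
    then show "((\<lambda>s. f (Z s) + g (Z s)) has_real_derivative (\<Sum>l\<in>V. (D1 l (Z x) + D2 l (Z x)) * Z' l)) (at x within S)"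
      by (simp add: sum.distrib distrib_right)
  qed
next
  case (pf_mult f g)
  then obtain D1 D2 where A: "\<forall>l. pf V (D1 l)" "\<forall>l. pf V (D2 l)"
    "\<forall>Z Z' x S. (\<forall>l\<in>V. ((\<lambda>s. Z s l) has_real_derivative Z' l) (at x within S))
     \<longrightarrow> ((\<lambda>s. f (Z s)) has_real_derivative (\<Sum>l\<in>V. D1 l (Z x) * Z' l)) (at x within S)"
    "\<forall>Z Z' x S. (\<forall>l\<in>V. ((\<lambda>s. Z s l) has_real_derivative Z' l) (at x within S))
     \<longrightarrow> ((\<lambda>s. g (Z s)) has_real_derivative (\<Sum>l\<in>V. D2 l (Z x) * Z' l)) (at x within S)"
    by blast
  show ?case
  proof (intro exI[of _ "\<lambda>l z. D1 l z * g z + f z * D2 l z"] conjI allI impI)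
    fix l show "pf V (\<lambda>z. D1 l z * g z + f z * D2 l z)" using A pf_mult by (simp add: pf.pf_add pf.pf_mult)
  next
    fix Z Z' x S assume h: "\<forall>l\<in>V. ((\<lambda>s. Z s l) has_real_derivative Z' l) (at x within S)"
    have "((\<lambda>s. f (Z s) * g (Z s)) has_real_derivative
       (\<Sum>l\<in>V. D1 l (Z x) * Z' l) * g (Z x) + f (Z x) * (\<Sum>l\<in>V. D2 l (Z x) * Z' l)) (at x within S)"
      using A(3,4) h by (intro derivative_eq_intros) auto
    then show "((\<lambda>s. f (Z s) * g (Z s)) has_real_derivative (\<Sum>l\<in>V. (D1 l (Z x) * g (Z x) + f (Z x) * D2 l (Z x)) * Z' l)) (at x within S)"
      by (simp add: sum.distrib distrib_right sum_distrib_left sum_distrib_right algebra_simps)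
  qed
qed


locale L3 =
  fixes b m :: nat
  assumes b2: "2 \<le> b" and m3: "3 \<le> m"
begin

lemma mom_pf: "n \<le> m \<Longrightarrow> pf {2..m} (\<lambda>z. mom z n)"
  unfolding mom_def
  by (cases "n = 0"; cases "n = 1") (auto intro: pf.intros)

lemma card_cnt_le: "card {t\<in>{..<k}. Q t} \<le> k"
  by (metis (no_types, lifting) card_lessThan card_mono finite_lessThan mem_Collect_eq subsetI)

lemma card_cnt_le': "card {t. t < k \<and> Q t} \<le> k"
  using card_cnt_le[of k Q] by simp

lemma cnt_le_m: "k \<le> m \<Longrightarrow> card {t. t < k \<and> Q t} \<le> m"
  using card_cnt_le'[of k Q] by linarith

lemma cnt_le_m': "k \<le> m \<Longrightarrow> card {t\<in>{..<k}. Q t} \<le> m"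
  using card_cnt_le[of k Q] by linarith

lemma P_pf: "k \<le> m \<Longrightarrow> pf {2..m} (P b k)"
proof -
  assume k: "k \<le> m"
  have "pf {2..m} (\<lambda>z. (1 / real b ^ k) *
     (\<Sum>r \<in> {..<k} \<rightarrow>\<^sub>E {..<b}. \<Sum>S \<in> {..<k} \<rightarrow>\<^sub>E (Pow {..<b} - {{}}).
        \<Prod>a\<in>{..<b}. \<Prod>c\<in>{..<b}. mom z (card {t\<in>{..<k}. r t = a \<and> c \<in> S t})))"
    using k by (intro pf_mult pf_const pf_sum pf_prod finite_PiE mom_pf cnt_le_m') auto
  then show ?thesis unfolding P_def by (simp add: fun_eq_iff)
qed

definition PD :: "nat \<Rightarrow> nat \<Rightarrow> (nat \<Rightarrow> real) \<Rightarrow> real" where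
  "PD i = (SOME D. (\<forall>l. pf {2..m} (D l)) \<and> (\<forall>Z Z' x S. (\<forall>l\<in>{2..m}. ((\<lambda>s. Z s l) has_real_derivative Z' l) (at x within S))
     \<longrightarrow> ((\<lambda>s. P b i (Z s)) has_real_derivative (\<Sum>l\<in>{2..m}. D l (Z x) * Z' l)) (at x within S)))"

lemma PD:
  assumes "i \<le> m"
  shows "pf {2..m} (PD i l)"
    "(\<And>l. l\<in>{2..m} \<Longrightarrow> ((\<lambda>s. Z s l) has_real_derivative Z' l) (at x within S))
     \<Longrightarrow> ((\<lambda>s. P b i (Z s)) has_real_derivative (\<Sum>l\<in>{2..m}. PD i l (Z x) * Z' l)) (at x within S)"
proof -
  have ex: "\<exists>D. (\<forall>l. pf {2..m} (D l)) \<and> (\<forall>Z Z' x S. (\<forall>l\<in>{2..m}. ((\<lambda>s. Z s l) has_real_derivative Z' l) (at x within S))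
     \<longrightarrow> ((\<lambda>s. P b i (Z s)) has_real_derivative (\<Sum>l\<in>{2..m}. D l (Z x) * Z' l)) (at x within S))"
    by (rule pf_chain[OF P_pf[OF assms]]) simp
  note * = someI_ex[OF ex, folded PD_def]
  show "pf {2..m} (PD i l)" using * by blast
  show "(\<And>l. l\<in>{2..m} \<Longrightarrow> ((\<lambda>s. Z s l) has_real_derivative Z' l) (at x within S))
     \<Longrightarrow> ((\<lambda>s. P b i (Z s)) has_real_derivative (\<Sum>l\<in>{2..m}. PD i l (Z x) * Z' l)) (at x within S)"
    using * by blast
qed

lemma Pvec_eq: "i \<in> {3..m} \<Longrightarrow> Pvec b m x y i = P b i (y(2 := x))"
  by (simp add: Pvec_def)

lemma partial_deriv:
  assumes "i \<le> m" "j \<in> {2..m}"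
  shows "((\<lambda>t. P b i (w(j := t))) has_real_derivative PD i j w) (at (w j))"
proof -
  have "((\<lambda>t. P b i (w(j := t))) has_real_derivative
      (\<Sum>l\<in>{2..m}. PD i l (w(j := w j)) * (if l = j then 1 else 0))) (at (w j))"
    by (rule PD(2)[OF assms(1)]) (auto intro!: derivative_eq_intros)
  also have "(\<Sum>l\<in>{2..m}. PD i l (w(j := w j)) * (if l = j then 1 else 0)) = PD i j w"
    using assms(2) by (simp add: if_distrib cong: if_cong)
  finally show ?thesis .
qed

lemma DP_eq:
  assumes "i \<in> {3..m}" "j \<in> {3..m}"
  shows "DP b m s w i j = PD i j (w(2 := s))"
proof -
  have "((\<lambda>t. P b i ((w(2 := s))(j := t))) has_real_derivative PD i j (w(2 := s))) (at ((w(2:=s)) j))"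
    using assms by (intro partial_deriv) auto
  moreover have "(\<lambda>t. Pvec b m s (w(j := t)) i) = (\<lambda>t. P b i ((w(2 := s))(j := t)))"
    using assms by (auto simp: Pvec_def fun_upd_twist)
  ultimately show ?thesis unfolding DP_def using assms
    by (auto intro!: DERIV_imp_deriv)
qed

lemma d1P_eq:
  assumes "i \<in> {3..m}"
  shows "d1P b m s w i = PD i 2 (w(2 := s))"
proof -
  have "((\<lambda>t. P b i ((w(2 := s))(2 := t))) has_real_derivative PD i 2 (w(2 := s))) (at ((w(2:=s)) 2))"
    using assms m3 by (intro partial_deriv) auto
  moreover have "(\<lambda>t. Pvec b m t w i) = (\<lambda>t. P b i ((w(2 := s))(2 := t)))"
    using assms by (auto simp: Pvec_def)
  ultimately show ?thesis unfolding d1P_def using assms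
    by (auto intro!: DERIV_imp_deriv)
qed

lemma P_zero: "1 \<le> k \<Longrightarrow> P b k (\<lambda>_. 0) = 0"
proof -
  assume k: "1 \<le> k"
  have zero: "(\<Prod>a\<in>{..<b}. \<Prod>c\<in>{..<b}. mom (\<lambda>_. 0) (card {t\<in>{..<k}. r t = a \<and> c \<in> S t})) = 0"
    if r: "r \<in> {..<k} \<rightarrow>\<^sub>E {..<b}" and S: "S \<in> {..<k} \<rightarrow>\<^sub>E (Pow {..<b} - {{}})" for r S
  proof -
    have S0: "S 0 \<in> Pow {..<b} - {{}}" using S k by (auto simp: PiE_def Pi_def)
    then obtain c where c: "c \<in> S 0" by blast
    have cb: "c < b" using S0 c by auto
    have "r 0 \<in> {..<b}" using r k by (auto simp: PiE_def Pi_def)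
    then have rb: "r 0 < b" by simp
    have "0 \<in> {t\<in>{..<k}. r t = r 0 \<and> c \<in> S t}" using c k by auto
    then have "card {t\<in>{..<k}. r t = r 0 \<and> c \<in> S t} \<noteq> 0" by (auto simp: card_eq_0_iff)
    then have "mom (\<lambda>_. 0) (card {t\<in>{..<k}. r t = r 0 \<and> c \<in> S t}) = 0" by (simp add: mom_def)
    then have "(\<Prod>c\<in>{..<b}. mom (\<lambda>_. 0) (card {t\<in>{..<k}. r t = r 0 \<and> c \<in> S t})) = 0"
      using cb by (intro prod_zero) auto
    then show ?thesis using rb by (intro prod_zero) auto
  qed
  have "(\<Sum>r \<in> {..<k} \<rightarrow>\<^sub>E {..<b}. \<Sum>S \<in> {..<k} \<rightarrow>\<^sub>E (Pow {..<b} - {{}}).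
        \<Prod>a\<in>{..<b}. \<Prod>c\<in>{..<b}. mom (\<lambda>_. 0) (card {t\<in>{..<k}. r t = a \<and> c \<in> S t})) = 0"
    by (intro sum.neutral ballI zero; assumption)
  then show ?thesis unfolding P_def by simp
qed

lemma mom_nonneg: "n \<le> m \<Longrightarrow> (\<forall>l\<in>{2..m}. 0 \<le> z l) \<Longrightarrow> 0 \<le> mom z n"
  by (auto simp: mom_def)

lemma mom_mono: "n \<le> m \<Longrightarrow> (\<forall>l\<in>{2..m}. z l \<le> z' l) \<Longrightarrow> mom z n \<le> mom z' n"
  by (auto simp: mom_def)

lemma P_nonneg: "k \<le> m \<Longrightarrow> (\<forall>l\<in>{2..m}. 0 \<le> z l) \<Longrightarrow> 0 \<le> P b k z"
  unfolding P_def
  by (intro mult_nonneg_nonneg sum_nonneg prod_nonneg mom_nonneg)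
     (auto intro: cnt_le_m)

lemma P_mono: "k \<le> m \<Longrightarrow> (\<forall>l\<in>{2..m}. 0 \<le> z l \<and> z l \<le> z' l) \<Longrightarrow> P b k z \<le> P b k z'"
  unfolding P_def
  by (intro mult_left_mono sum_mono prod_mono conjI mom_nonneg mom_mono prod_nonneg)
     (auto intro: cnt_le_m)

end

context L3 begin

lemma sum_indicator_card: "finite A \<Longrightarrow> (\<Sum>x\<in>A. if Q x then 1 else 0 :: real) = real (card {x\<in>A. Q x})"
  by (simp add: sum.inter_filter[symmetric])

lemma PD_zero:
  assumes i: "i \<in> {3..m}" and j: "j \<in> {3..m}"
  shows "PD i j (\<lambda>_. 0) = (if i = j then real b ^ 2 / real b ^ i else 0)"
proof -
  define z where "z t = (\<lambda>_::nat. 0::real)(j := t)" for t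
  define A where "A = {..<i} \<rightarrow>\<^sub>E {..<b}"
  define B where "B = {..<i} \<rightarrow>\<^sub>E (Pow {..<b} - {{}})"
  define cnt where "cnt r S a c = card {t. t < i \<and> r t = a \<and> c \<in> S t}" for r :: "nat \<Rightarrow> nat" and S :: "nat \<Rightarrow> nat set" and a c
  define good where "good r S \<longleftrightarrow> (\<forall>p\<in>{..<b}\<times>{..<b}. cnt r S (fst p) (snd p) \<in> {0,j})" for r S
  define N where "N r S = card {p\<in>{..<b}\<times>{..<b}. cnt r S (fst p) (snd p) = j}" for r S
  have d1: "((\<lambda>t. P b i (z t)) has_real_derivative PD i j (\<lambda>_. 0)) (at 0)"
    using partial_deriv[of i j "\<lambda>_. 0"] i j unfolding z_def by auto
  have momz: "mom (z t) n = (if n = 0 then 1 else if n = j then t else 0)" for t n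
    using j by (auto simp: mom_def z_def)
  have summand: "(\<Prod>a\<in>{..<b}. \<Prod>c\<in>{..<b}. mom (z t) (cnt r S a c)) = (if good r S then t ^ N r S else 0)" for t r S
  proof -
    have "(\<Prod>a\<in>{..<b}. \<Prod>c\<in>{..<b}. mom (z t) (cnt r S a c)) = (\<Prod>p\<in>{..<b}\<times>{..<b}. mom (z t) (cnt r S (fst p) (snd p)))"
      by (simp add: prod.cartesian_product case_prod_beta)
    also have "\<dots> = (if good r S then t ^ N r S else 0)"
    proof (cases "good r S")
      case True
      then have "(\<Prod>p\<in>{..<b}\<times>{..<b}. mom (z t) (cnt r S (fst p) (snd p))) = (\<Prod>p\<in>{..<b}\<times>{..<b}. t ^ (if cnt r S (fst p) (snd p) = j then 1 else 0))"
      proof (intro prod.cong refl)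
        fix p assume p: "p \<in> {..<b}\<times>{..<b}"
        from True[unfolded good_def] p have "cnt r S (fst p) (snd p) \<in> {0, j}" by (rule bspec)
        then show "mom (z t) (cnt r S (fst p) (snd p)) = t ^ (if cnt r S (fst p) (snd p) = j then 1 else 0)"
          using j by (auto simp: momz)
      qed
      also have "\<dots> = t ^ (\<Sum>p\<in>{..<b}\<times>{..<b}. if cnt r S (fst p) (snd p) = j then 1 else 0)"
        by (simp add: power_sum)
      also have "(\<Sum>p\<in>{..<b}\<times>{..<b}. if cnt r S (fst p) (snd p) = j then 1 else 0) = N r S"
        unfolding N_def by (simp add: sum.inter_filter[symmetric])
      finally show ?thesis using True by simp
    next
      case False
      then have ex: "\<not> (\<forall>p\<in>{..<b}\<times>{..<b}. cnt r S (fst p) (snd p) \<in> {0, j})" using good_def by auto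
      have "\<exists>p\<in>{..<b}\<times>{..<b}. cnt r S (fst p) (snd p) \<notin> {0, j}" using ex by metis
      then obtain p where p: "p \<in> {..<b}\<times>{..<b}" "cnt r S (fst p) (snd p) \<notin> {0, j}" ..
      then have mz: "mom (z t) (cnt r S (fst p) (snd p)) = 0" by (auto simp: momz)
      have "(\<Prod>p\<in>{..<b}\<times>{..<b}. mom (z t) (cnt r S (fst p) (snd p))) = 0"
        apply (rule prod_zero)
         apply simp
        using p(1) mz by blast
      then show ?thesis using False by simp
    qed
    finally show ?thesis .
  qed
  have Pz: "P b i (z t) = (1 / real b ^ i) * (\<Sum>r\<in>A. \<Sum>S\<in>B. if good r S then t ^ N r S else 0)" for t
    unfolding P_def A_def B_def using summand[of t] by (simp add: cnt_def)
  have dsum: "((\<lambda>t. if good r S then t ^ N r S else 0) has_real_derivative (if good r S \<and> N r S = 1 then 1 else 0)) (at 0)" for r S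
  proof (cases "good r S")
    case True
    have "((\<lambda>t. t ^ N r S) has_real_derivative real (N r S) * 0 ^ (N r S - 1)) (at 0)"
      by (auto intro!: derivative_eq_intros)
    moreover have "real (N r S) * (0::real) ^ (N r S - 1) = (if N r S = 1 then 1 else 0)"
      by (cases "N r S"; cases "N r S - 1") auto
    ultimately have d: "((\<lambda>t. t ^ N r S) has_real_derivative (if N r S = 1 then 1 else 0)) (at 0)"
      by (simp only:)
    have eq1: "(\<lambda>t. if good r S then t ^ N r S else 0) = (\<lambda>t. t ^ N r S)" using True by simp
    have eq2: "(if good r S \<and> N r S = 1 then 1 else 0) = (if N r S = 1 then 1 else (0::real))" using True by simp
    show ?thesis unfolding eq1 eq2 by (rule d)
  qed simp
  have d2: "((\<lambda>t. P b i (z t)) has_real_derivative (1 / real b ^ i) * (\<Sum>r\<in>A. \<Sum>S\<in>B. if good r S \<and> N r S = 1 then 1 else 0)) (at 0)"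
    unfolding Pz by (intro DERIV_cmult DERIV_sum dsum)
  define RA where "RA = (\<lambda>a. restrict (\<lambda>t. a) {..<i}) ` {..<b}"
  define SB where "SB = (\<lambda>c. restrict (\<lambda>t. {c}) {..<i}) ` {..<b}"
  have i0: "0 < i" using i by auto
  have charac: "(good r S \<and> N r S = 1) \<longleftrightarrow> (i = j \<and> r \<in> RA \<and> S \<in> SB)" if r: "r \<in> A" and S: "S \<in> B" for r S
  proof
    assume h: "good r S \<and> N r S = 1"
    then obtain p0 where p0: "{p\<in>{..<b}\<times>{..<b}. cnt r S (fst p) (snd p) = j} = {p0}"
      unfolding N_def using card_1_singletonE by blast
    obtain a0 c0 where ac: "p0 = (a0, c0)" by (cases p0)
    have "p0 \<in> {p\<in>{..<b}\<times>{..<b}. cnt r S (fst p) (snd p) = j}" unfolding p0 by simp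
    then have p0in: "a0 < b" "c0 < b" "cnt r S a0 c0 = j" using ac by simp_all
    have zero: "cnt r S a c = 0" if "a < b" "c < b" "(a, c) \<noteq> (a0, c0)" for a c
    proof -
      have "cnt r S a c \<in> {0, j}" using h that unfolding good_def by auto
      moreover have "cnt r S a c \<noteq> j"
      proof
        assume "cnt r S a c = j"
        then have "(a, c) \<in> {p\<in>{..<b}\<times>{..<b}. cnt r S (fst p) (snd p) = j}" using that by simp
        then show False unfolding p0 using ac that by simp
      qed
      ultimately show ?thesis by auto
    qed
    have rt: "r t = a0 \<and> S t = {c0}" if t: "t < i" for t
    proof -
      have St: "S t \<in> Pow {..<b} - {{}}" using S t unfolding B_def by (auto simp: PiE_def Pi_def)
      have rtb: "r t < b" using r t unfolding A_def by (auto simp: PiE_def Pi_def)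
      have key: "(r t, c) = (a0, c0)" if c: "c \<in> S t" for c
      proof (rule ccontr)
        assume ne: "(r t, c) \<noteq> (a0, c0)"
        have cb: "c < b" using St c by auto
        have "t \<in> {t'. t' < i \<and> r t' = r t \<and> c \<in> S t'}" using t c by auto
        then have "cnt r S (r t) c \<noteq> 0" unfolding cnt_def by (auto simp: card_eq_0_iff)
        then show False using zero[OF rtb cb ne] by simp
      qed
      obtain c where "c \<in> S t" using St by blast
      then have "r t = a0" using key by auto
      moreover have "S t = {c0}" using key St \<open>c \<in> S t\<close> by fastforce
      ultimately show ?thesis by simp
    qed
    have "r = restrict (\<lambda>t. a0) {..<i}"
      using r rt unfolding A_def by (auto simp: PiE_def extensional_def fun_eq_iff)
    then have rRA: "r \<in> RA" unfolding RA_def using p0in by auto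
    have "S = restrict (\<lambda>t. {c0}) {..<i}"
      using S rt unfolding B_def by (auto simp: PiE_def extensional_def fun_eq_iff)
    then have SSB: "S \<in> SB" unfolding SB_def using p0in by auto
    have "{t. t < i \<and> r t = a0 \<and> c0 \<in> S t} = {..<i}" using rt by auto
    then have "cnt r S a0 c0 = i" unfolding cnt_def by simp
    then have "i = j" using p0in by simp
    then show "i = j \<and> r \<in> RA \<and> S \<in> SB" using rRA SSB by simp
  next
    assume h: "i = j \<and> r \<in> RA \<and> S \<in> SB"
    then obtain a0 c0 where ac: "a0 < b" "c0 < b" "r = restrict (\<lambda>t. a0) {..<i}" "S = restrict (\<lambda>t. {c0}) {..<i}"
      unfolding RA_def SB_def by auto
    have cnt_eq: "cnt r S a c = (if a = a0 \<and> c = c0 then i else 0)" for a c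
    proof -
      have "{t. t < i \<and> r t = a \<and> c \<in> S t} = (if a = a0 \<and> c = c0 then {..<i} else {})"
        using ac by auto
      then show ?thesis unfolding cnt_def by simp
    qed
    have g: "good r S" unfolding good_def using h by (auto simp: cnt_eq)
    have "{p\<in>{..<b}\<times>{..<b}. cnt r S (fst p) (snd p) = j} = {(a0, c0)}"
      using h i ac(1,2) by (auto simp: cnt_eq split: if_splits)
    then have "N r S = 1" unfolding N_def by simp
    then show "good r S \<and> N r S = 1" using g by simp
  qed
  have RAA: "RA \<subseteq> A" unfolding RA_def A_def by (auto simp only: restrict_PiE_iff image_subset_iff)
  have SBB: "SB \<subseteq> B" unfolding SB_def B_def by (auto simp only: restrict_PiE_iff image_subset_iff)
  have cardRA: "card RA = b"
  proof -
    have "inj_on (\<lambda>a. restrict (\<lambda>t. a) {..<i}) {..<b}"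
      using i0 by (auto simp: inj_on_def fun_eq_iff)
    then show ?thesis unfolding RA_def by (simp add: card_image)
  qed
  have cardSB: "card SB = b"
  proof -
    have "inj_on (\<lambda>c. restrict (\<lambda>t. {c}) {..<i}) {..<b}"
      using i0 by (auto simp: inj_on_def fun_eq_iff)
    then show ?thesis unfolding SB_def by (simp add: card_image)
  qed
  have finA: "finite A" "finite B" unfolding A_def B_def by (auto intro!: finite_PiE)
  have "(\<Sum>r\<in>A. \<Sum>S\<in>B. if good r S \<and> N r S = 1 then 1 else 0) =
        (\<Sum>r\<in>A. \<Sum>S\<in>B. if i = j \<and> r \<in> RA \<and> S \<in> SB then 1 else (0::real))"
  proof (intro sum.cong refl)
    fix r S assume rS: "r \<in> A" "S \<in> B"
    show "(if good r S \<and> N r S = 1 then 1 else 0) = (if i = j \<and> r \<in> RA \<and> S \<in> SB then 1 else (0::real))"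
      by (simp only: charac[OF rS])
  qed
  also have "\<dots> = (if i = j then real b ^ 2 else 0)"
  proof (cases "i = j")
    case True
    have "(\<Sum>r\<in>A. \<Sum>S\<in>B. if r \<in> RA \<and> S \<in> SB then 1 else (0::real)) =
          (\<Sum>r\<in>A. (if r \<in> RA then 1 else 0) * (\<Sum>S\<in>B. if S \<in> SB then 1 else (0::real)))"
    proof (intro sum.cong refl)
      fix r show "(\<Sum>S\<in>B. if r \<in> RA \<and> S \<in> SB then 1 else (0::real)) = (if r \<in> RA then 1 else 0) * (\<Sum>S\<in>B. if S \<in> SB then 1 else (0::real))"
        by (cases "r \<in> RA") simp_all
    qed
    also have "\<dots> = (\<Sum>r\<in>A. if r \<in> RA then 1 else 0) * (\<Sum>S\<in>B. if S \<in> SB then 1 else (0::real))"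
      by (simp add: sum_distrib_right)
    also have "\<dots> = real (card RA) * real (card SB)"
      using finA RAA SBB by (simp add: sum_indicator_card Int_absorb1 Collect_mem_eq
          inf_set_def[symmetric] Int_commute flip: Int_def)
    finally show ?thesis using True cardRA cardSB by (simp add: power2_eq_square)
  qed simp
  finally have "PD i j (\<lambda>_. 0) = (1 / real b ^ i) * (if i = j then real b ^ 2 else 0)"
    using DERIV_unique[OF d1 d2] by simp
  then show ?thesis by simp
qed

end

lemma prod_one_nontriv: "finite A \<Longrightarrow> x \<in> A \<Longrightarrow> (\<And>a. a \<in> A \<Longrightarrow> a \<noteq> x \<Longrightarrow> f a = 1) \<Longrightarrow> prod f A = f x"
  by (subst prod.remove[of A x]) (auto intro!: prod.neutral)

lemma prod_two_nontriv: "finite A \<Longrightarrow> x \<in> A \<Longrightarrow> y \<in> A \<Longrightarrow> x \<noteq> y \<Longrightarrow>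
   (\<And>a. a \<in> A \<Longrightarrow> a \<noteq> x \<Longrightarrow> a \<noteq> y \<Longrightarrow> f a = 1) \<Longrightarrow> prod f A = f x * f y"
  apply (subst prod.remove[of A x], assumption+)
  apply (subst prod_one_nontriv[of "A - {x}" y]) 
  by auto

context L3 begin

lemma P_term_le:
  assumes k: "k \<le> m" and z: "\<forall>l\<in>{2..m}. 0 \<le> z l"
    and r0: "r0 \<in> {..<k} \<rightarrow>\<^sub>E {..<b}" and S0: "S0 \<in> {..<k} \<rightarrow>\<^sub>E (Pow {..<b} - {{}})"
  shows "(1 / real b ^ k) * (\<Prod>a\<in>{..<b}. \<Prod>c\<in>{..<b}. mom z (card {t\<in>{..<k}. r0 t = a \<and> c \<in> S0 t})) \<le> P b k z"
  unfolding P_def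
proof (intro mult_left_mono)
  define f where "f r S = (\<Prod>a\<in>{..<b}. \<Prod>c\<in>{..<b}. mom z (card {t\<in>{..<k}. r t = a \<and> c \<in> S t}))" for r S
  have fnn: "0 \<le> f r S" for r S unfolding f_def
    using z k by (intro prod_nonneg mom_nonneg) (auto intro!: cnt_le_m)
  have "f r0 S0 \<le> (\<Sum>S \<in> {..<k} \<rightarrow>\<^sub>E (Pow {..<b} - {{}}). f r0 S)"
    by (rule member_le_sum[OF S0]) (auto simp: fnn intro!: finite_PiE)
  also have "\<dots> \<le> (\<Sum>r \<in> {..<k} \<rightarrow>\<^sub>E {..<b}. \<Sum>S \<in> {..<k} \<rightarrow>\<^sub>E (Pow {..<b} - {{}}). f r S)"
    by (rule member_le_sum[OF r0]) (auto simp: fnn intro!: finite_PiE sum_nonneg)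
  finally show "(\<Prod>a\<in>{..<b}. \<Prod>c\<in>{..<b}. mom z (card {t\<in>{..<k}. r0 t = a \<and> c \<in> S0 t}))
     \<le> (\<Sum>r \<in> {..<k} \<rightarrow>\<^sub>E {..<b}. \<Sum>S \<in> {..<k} \<rightarrow>\<^sub>E (Pow {..<b} - {{}}).
        \<Prod>a\<in>{..<b}. \<Prod>c\<in>{..<b}. mom z (card {t\<in>{..<k}. r t = a \<and> c \<in> S t}))"
    unfolding f_def .
qed simp

lemma P_lower:
  assumes k: "4 \<le> k" "k \<le> m" and z: "\<forall>l\<in>{2..m}. 0 \<le> z l"
  shows "z 2 * z (k - 2) / real b ^ k \<le> P b k z"
proof -
  define r0 where "r0 = restrict (\<lambda>t::nat. 0::nat) {..<k}"
  define S0 where "S0 = restrict (\<lambda>t::nat. if t < 2 then {0::nat} else {1}) {..<k}"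
  have r0A: "r0 \<in> {..<k} \<rightarrow>\<^sub>E {..<b}" unfolding r0_def using b2 by auto
  have S0B: "S0 \<in> {..<k} \<rightarrow>\<^sub>E (Pow {..<b} - {{}})" unfolding S0_def using b2 by auto
  have c00: "{t\<in>{..<k}. r0 t = 0 \<and> 0 \<in> S0 t} = {0, 1}" unfolding r0_def S0_def using k by auto
  have c01: "{t\<in>{..<k}. r0 t = 0 \<and> 1 \<in> S0 t} = {2..<k}" unfolding r0_def S0_def using k by auto
  have cother: "{t\<in>{..<k}. r0 t = a \<and> c \<in> S0 t} = {}" if "a \<noteq> 0 \<or> c \<ge> 2" for a c
    unfolding r0_def S0_def using that by auto
  have cnt: "card {t\<in>{..<k}. r0 t = a \<and> c \<in> S0 t} = (if a = 0 \<and> c = 0 then 2 else if a = 0 \<and> c = 1 then k - 2 else 0)" for a c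
  proof (cases "a = 0 \<and> c = 0")
    case True then show ?thesis using c00 by simp
  next
    case F1: False
    show ?thesis
    proof (cases "a = 0 \<and> c = 1")
      case True then show ?thesis using c01 k by simp
    next
      case False
      then have "a \<noteq> 0 \<or> c \<ge> 2" using F1 by auto
      then have e: "{t\<in>{..<k}. r0 t = a \<and> c \<in> S0 t} = {}" by (rule cother)
      show ?thesis unfolding e if_not_P[OF F1] if_not_P[OF False] by simp
    qed
  qed
  have "(\<Prod>a\<in>{..<b}. \<Prod>c\<in>{..<b}. mom z (card {t\<in>{..<k}. r0 t = a \<and> c \<in> S0 t}))
      = (\<Prod>a\<in>{..<b}. \<Prod>c\<in>{..<b}. mom z (if a = 0 \<and> c = 0 then 2 else if a = 0 \<and> c = 1 then k - 2 else 0))"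
    by (simp only: cnt)
  also have "\<dots> = (\<Prod>c\<in>{..<b}. mom z (if (0::nat) = 0 \<and> c = 0 then 2 else if (0::nat) = 0 \<and> c = 1 then k - 2 else 0))"
    using b2 by (intro prod_one_nontriv) (auto simp: mom_def intro!: prod.neutral)
  also have "\<dots> = (\<Prod>c\<in>{..<b}. mom z (if c = 0 then 2 else if c = 1 then k - 2 else 0))"
    by (simp cong: if_cong)
  also have "\<dots> = mom z 2 * mom z (k - 2)"
    using b2 by (subst prod_two_nontriv[of _ 0 1]) (auto simp: mom_def)
  also have "\<dots> = z 2 * z (k - 2)" using k by (simp add: mom_def)
  finally have "(1 / real b ^ k) * (z 2 * z (k - 2)) \<le> P b k z"
    using P_term_le[OF k(2) z r0A S0B] by simp
  then show ?thesis by simp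
qed

lemma P3_lower:
  assumes z: "\<forall>l\<in>{2..m}. 0 \<le> z l"
  shows "z 2 * z 2 / real b ^ 3 \<le> P b 3 z"
proof -
  define r0 where "r0 = restrict (\<lambda>t::nat. 0::nat) {..<3}"
  define S0 where "S0 = restrict (\<lambda>t::nat. if t = 0 then {0::nat} else if t = 1 then {0, 1} else {1}) {..<3}"
  have r0A: "r0 \<in> {..<3} \<rightarrow>\<^sub>E {..<b}" unfolding r0_def using b2 by auto
  have S0B: "S0 \<in> {..<3} \<rightarrow>\<^sub>E (Pow {..<b} - {{}})" unfolding S0_def using b2 by auto
  have c00: "{t\<in>{..<3}. r0 t = 0 \<and> 0 \<in> S0 t} = {0, 1}" unfolding r0_def S0_def by auto
  have c01: "{t\<in>{..<3}. r0 t = 0 \<and> 1 \<in> S0 t} = {1, 2}" unfolding r0_def S0_def by auto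
  have cother: "{t\<in>{..<3}. r0 t = a \<and> c \<in> S0 t} = {}" if "a \<noteq> 0 \<or> c \<ge> 2" for a c
    unfolding r0_def S0_def using that by auto
  have cnt: "card {t\<in>{..<3}. r0 t = a \<and> c \<in> S0 t} = (if a = 0 \<and> c = 0 then 2 else if a = 0 \<and> c = 1 then 2 else 0)" for a c
  proof (cases "a = 0 \<and> c = 0")
    case True then show ?thesis using c00 by simp
  next
    case F1: False
    show ?thesis
    proof (cases "a = 0 \<and> c = 1")
      case True then show ?thesis using c01  by simp
    next
      case False
      then have "a \<noteq> 0 \<or> c \<ge> 2" using F1 by auto
      then have e: "{t\<in>{..<3}. r0 t = a \<and> c \<in> S0 t} = {}" by (rule cother)
      show ?thesis unfolding e if_not_P[OF F1] if_not_P[OF False] by simp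
    qed
  qed
  have "(\<Prod>a\<in>{..<b}. \<Prod>c\<in>{..<b}. mom z (card {t\<in>{..<3}. r0 t = a \<and> c \<in> S0 t}))
      = (\<Prod>a\<in>{..<b}. \<Prod>c\<in>{..<b}. mom z (if a = 0 \<and> c = 0 then 2 else if a = 0 \<and> c = 1 then 2 else 0))"
    by (simp only: cnt)
  also have "\<dots> = (\<Prod>c\<in>{..<b}. mom z (if (0::nat) = 0 \<and> c = 0 then 2 else if (0::nat) = 0 \<and> c = 1 then 2 else 0))"
    using b2 by (intro prod_one_nontriv) (auto simp: mom_def intro!: prod.neutral)
  also have "\<dots> = (\<Prod>c\<in>{..<b}. mom z (if c = 0 then 2 else if c = 1 then 2 else 0))"
    by (simp cong: if_cong)
  also have "\<dots> = mom z 2 * mom z (2)"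
    using b2 by (subst prod_two_nontriv[of _ 0 1]) (auto simp: mom_def)
  also have "\<dots> = z 2 * z 2" by (simp add: mom_def)
  finally have "(1 / real b ^ 3) * (z 2 * z 2) \<le> P b 3 z"
    using P_term_le[OF m3 z r0A S0B] by simp
  then show ?thesis by simp
qed

end

lemma Bernoulli_strict:
  fixes y :: real assumes y: "0 < y" and n: "2 \<le> n" shows "1 + real n * y < (1 + y) ^ n"
  using n
proof (induction n rule: dec_induct)
  case base then show ?case using y by (simp add: power2_eq_square algebra_simps)
next
  case (step n)
  have "1 + real (Suc n) * y < (1 + real n * y) * (1 + y)"
    using y step.hyps by (simp add: algebra_simps)
  also have "\<dots> \<le> (1 + y) ^ n * (1 + y)"
    using step.IH y by (intro mult_right_mono) auto
  finally show ?case by (simp add: mult.commute)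
qed

context L3 begin

abbreviation T where "T \<equiv> Mb_inv_pow b"

definition Mbd :: "real \<Rightarrow> real" where "Mbd y = (1 + real b * y) powr (1 / real b - 1)"

lemma bpos: "0 < real b" using b2 by simp

lemma root_pow: assumes x0: "0 \<le> x" shows "(x ^ b) powr (1 / real b) = x"
proof (cases "x = 0")
  case True then show ?thesis using b2 x0 by simp
next
  case False
  then have x: "0 < x" using x0 by simp
  have "(x ^ b) powr (1 / real b) = (x powr real b) powr (1 / real b)" using x by (simp add: powr_realpow)
  also have "\<dots> = x powr (real b * (1 / real b))" using x by (simp only: powr_powr)
  also have "\<dots> = x" using bpos x by simp
  finally show ?thesis .
qed

lemma pow_root: assumes x0: "0 \<le> x" shows "(x powr (1 / real b)) ^ b = x"
proof (cases "x = 0")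
  case True then show ?thesis using b2 by simp
next
  case False
  then have "x \<noteq> 0" using False by simp
  then show ?thesis using bpos x0 by (simp add: powr_power)
qed

lemma Mbinv_nonneg: "0 \<le> y \<Longrightarrow> 0 \<le> Mb_inv b y"
  unfolding Mb_inv_def using bpos by (simp add: ge_one_powr_ge_zero)

lemma Mbinv_le: "0 \<le> y \<Longrightarrow> Mb_inv b y \<le> y"
proof -
  assume y: "0 \<le> y"
  have "1 + real b * y \<le> (1 + y) ^ b" using Bernoulli_inequality[of y b] y by simp
  then have "(1 + real b * y) powr (1 / real b) \<le> ((1 + y) ^ b) powr (1 / real b)"
    using y bpos by (intro powr_mono2) auto
  also have "\<dots> = 1 + y" using y by (simp add: root_pow)
  finally show ?thesis unfolding Mb_inv_def by simp
qed

lemma Mbinv_less: "0 < y \<Longrightarrow> Mb_inv b y < y"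
proof -
  assume y: "0 < y"
  have "1 + real b * y < (1 + y) ^ b" using Bernoulli_strict[OF y b2] .
  then have "(1 + real b * y) powr (1 / real b) < ((1 + y) ^ b) powr (1 / real b)"
    using y bpos by (intro powr_less_mono2) auto
  also have "\<dots> = 1 + y" using y by (simp add: root_pow)
  finally show ?thesis unfolding Mb_inv_def by simp
qed

lemma Mbinv_mono: "0 \<le> y \<Longrightarrow> y \<le> y' \<Longrightarrow> Mb_inv b y \<le> Mb_inv b y'"
  unfolding Mb_inv_def using bpos by (auto intro!: powr_mono2 mult_left_mono)

lemma Mb_Mbinv: "0 \<le> y \<Longrightarrow> Mb b (Mb_inv b y) = y"
  unfolding Mb_def Mb_inv_def using bpos by (simp add: pow_root)

lemma Mbinv_Mb: "0 \<le> x \<Longrightarrow> Mb_inv b (Mb b x) = x"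
  unfolding Mb_def Mb_inv_def using bpos by (simp add: root_pow)

lemma Mb_nonneg: "0 \<le> x \<Longrightarrow> 0 \<le> Mb b x"
  unfolding Mb_def by (simp add: one_le_power)

lemma Mbinv_deriv: "0 \<le> y \<Longrightarrow> (Mb_inv b has_real_derivative Mbd y) (at y)"
proof -
  assume y: "0 \<le> y"
  have pos: "0 < 1 + real b * y" using y bpos by (simp add: add_pos_nonneg)
  have "((\<lambda>y. (1 + real b * y) powr (1 / real b) - 1) has_real_derivative
      (1 + real b * y) powr (1 / real b - 1)) (at y)"
    using pos bpos by (auto intro!: derivative_eq_intros)
  then show ?thesis unfolding Mb_inv_def[abs_def] Mbd_def by simp
qed

lemma Mbd_bounds: "0 \<le> y \<Longrightarrow> 0 \<le> Mbd y \<and> Mbd y \<le> 1"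
proof -
  assume y: "0 \<le> y"
  have one: "1 \<le> 1 + real b * y" using y bpos by simp
  have "(1 + real b * y) powr (1 / real b - 1) \<le> (1 + real b * y) powr 0"
    using one b2 by (intro powr_mono) (auto simp: field_simps)
  then show ?thesis unfolding Mbd_def using one by simp
qed

lemma Mbinv_cont: "0 \<le> y \<Longrightarrow> isCont (Mb_inv b) y"
  using Mbinv_deriv DERIV_isCont by blast

lemma T_0[simp]: "T 0 x = x" by (simp add: Mb_inv_pow_def)

lemma T_Suc: "T (Suc n) x = T n (Mb_inv b x)"
  by (simp only: Mb_inv_pow_def funpow_Suc_right o_apply)

lemma T_Suc': "T (Suc n) x = Mb_inv b (T n x)"
  by (simp add: Mb_inv_pow_def)

lemma T_1[simp]: "T 1 x = Mb_inv b x" by (simp add: Mb_inv_pow_def)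
lemma T_Suc0[simp]: "T (Suc 0) x = Mb_inv b x" by (simp add: Mb_inv_pow_def)

lemma T_add: "T (a + n) x = T n (T a x)"
  by (simp add: Mb_inv_pow_def funpow_add add.commute[of a n])

lemma T_nonneg: "0 \<le> x \<Longrightarrow> 0 \<le> T n x"
  by (induction n) (auto simp: T_Suc' Mbinv_nonneg)

lemma T_le: "0 \<le> x \<Longrightarrow> T n x \<le> x"
  by (induction n) (auto simp: T_Suc' intro: order_trans[OF Mbinv_le] T_nonneg)

lemma T_mono: "0 \<le> x \<Longrightarrow> x \<le> x' \<Longrightarrow> T n x \<le> T n x'"
  by (induction n) (auto simp: T_Suc' intro!: Mbinv_mono T_nonneg)

lemma T_antimono: assumes x: "0 \<le> x" and nn: "n \<le> n'" shows "T n' x \<le> T n x"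
  using nn
proof (induction n' rule: dec_induct)
  case (step k) then show ?case using Mbinv_le[OF T_nonneg[OF x]] by (metis T_Suc' order_trans)
qed simp

lemma T_tendsto: assumes R: "0 \<le> R" shows "(\<lambda>n. T n R) \<longlonglongrightarrow> 0"
proof -
  have dec: "decseq (\<lambda>n. T n R)" unfolding decseq_def using T_antimono R by blast
  have bdd: "\<forall>n. 0 \<le> T n R" using T_nonneg R by blast
  obtain L where L: "(\<lambda>n. T n R) \<longlonglongrightarrow> L"
    using decseq_convergent[OF dec bdd] by blast
  have L0: "0 \<le> L" using L bdd by (intro LIMSEQ_le_const) auto
  have "(\<lambda>n. Mb_inv b (T n R)) \<longlonglongrightarrow> Mb_inv b L"
    using Mbinv_cont[OF L0] L isCont_tendsto_compose by blast
  moreover have "(\<lambda>n. Mb_inv b (T n R)) \<longlonglongrightarrow> L"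
    using L unfolding T_Suc'[symmetric] by (rule LIMSEQ_Suc)
  ultimately have "Mb_inv b L = L" using LIMSEQ_unique by blast
  then have "L = 0" using Mbinv_less[of L] L0 by force
  then show ?thesis using L by simp
qed

lemma T_small: assumes "0 \<le> R" "0 < d" shows "\<exists>N. \<forall>n\<ge>N. \<forall>x\<in>{0..R}. T n x \<le> d"
proof -
  obtain N where N: "\<forall>n\<ge>N. \<bar>T n R\<bar> < d"
    using T_tendsto[OF assms(1)] assms(2) unfolding lim_sequentially dist_real_def by fastforce
  show ?thesis
  proof (intro exI allI impI ballI)
    fix n x assume "N \<le> n" "x \<in> {0..R}"
    then show "T n x \<le> d" using N T_mono[of x R n] by fastforce
  qed
qed

definition Td :: "nat \<Rightarrow> real \<Rightarrow> real" where "Td k x = (\<Prod>j<k. Mbd (T j x))"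

lemma T_deriv: "0 \<le> x \<Longrightarrow> (T k has_real_derivative Td k x) (at x)"
proof (induction k)
  case 0 then show ?case by (simp add: Td_def Mb_inv_pow_def)
next
  case (Suc k)
  have eq: "T (Suc k) = Mb_inv b \<circ> T k" by (simp add: fun_eq_iff T_Suc')
  have D: "(Mb_inv b \<circ> T k has_real_derivative Mbd (T k x) * Td k x) (at x)"
    using Suc T_nonneg by (intro DERIV_chain Mbinv_deriv) auto
  have Tdeq: "Td (Suc k) x = Mbd (T k x) * Td k x" by (simp add: Td_def mult.commute)
  show ?case unfolding Tdeq eq by (rule D)
qed

lemma deriv_T: "0 \<le> x \<Longrightarrow> deriv (T k) x = Td k x"
  by (rule DERIV_imp_deriv[OF T_deriv])

lemma Td_bounds: "0 \<le> x \<Longrightarrow> 0 \<le> Td k x \<and> Td k x \<le> 1"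
  unfolding Td_def using Mbd_bounds T_nonneg by (auto intro!: prod_nonneg prod_le_1)

lemma Td_Suc: "Td (Suc k) x = Td k (Mb_inv b x) * Mbd x"
  unfolding Td_def by (simp only: prod.lessThan_Suc_shift T_Suc T_0 mult.commute)

lemma Fcomp_0[simp]: "Fcomp b m x 0 y = y" by (simp add: Fcomp_def)

lemma Fcomp_Suc: "Fcomp b m x (Suc n) y = Pvec b m (Mb_inv b x) (Fcomp b m (Mb_inv b x) n y)"
proof -
  have eq: "[1..<Suc (Suc n)] = 1 # map Suc [1..<Suc n]" by (simp add: upt_conv_Cons map_Suc_upt)
  have f: "(\<lambda>k w. Fmap b m x k w) \<circ> Suc = (\<lambda>k w. Fmap b m (Mb_inv b x) k w)"
    by (simp add: fun_eq_iff Fmap_def T_Suc)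
  have "foldr (\<lambda>k w. Fmap b m x k w) (1 # map Suc [1..<Suc n]) y
     = Fmap b m x 1 (foldr ((\<lambda>k w. Fmap b m x k w) \<circ> Suc) [1..<Suc n] y)"
    by (simp only: foldr_Cons foldr_map o_apply)
  also have "\<dots> = Pvec b m (Mb_inv b x) (Fcomp b m (Mb_inv b x) n y)"
    unfolding f Fcomp_def by (simp add: Fmap_def)
  finally show ?thesis unfolding Fcomp_def eq .
qed

lemma Fcomp_add: "Fcomp b m x (a + n) y = Fcomp b m x a (Fcomp b m (T a x) n y)"
  by (induction a arbitrary: x) (simp_all add: Fcomp_Suc T_Suc)

end

lemma finite_unif:
  assumes "finite A" "\<And>a. a \<in> A \<Longrightarrow> \<exists>L\<ge>0. Q a (L::real)"
    "\<And>a L L'. a \<in> A \<Longrightarrow> Q a L \<Longrightarrow> L \<le> L' \<Longrightarrow> Q a L'"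
  shows "\<exists>L\<ge>0. \<forall>a\<in>A. Q a L"
proof -
  obtain f where f: "\<forall>a\<in>A. f a \<ge> 0 \<and> Q a (f a)" using assms(2) by metis
  have "\<forall>a\<in>A. Q a (\<Sum>a\<in>A. f a)"
  proof
    fix a assume a: "a \<in> A"
    have "f a \<le> (\<Sum>a\<in>A. f a)" using f a assms(1) by (intro member_le_sum) auto
    then show "Q a (\<Sum>a\<in>A. f a)" using assms(3)[OF a] f a by blast
  qed
  moreover have "(\<Sum>a\<in>A. f a) \<ge> 0" using f by (intro sum_nonneg) auto
  ultimately show ?thesis by blast
qed

context L3 begin

definition bx :: "real \<Rightarrow> (nat \<Rightarrow> real) \<Rightarrow> bool" where "bx c w \<longleftrightarrow> (\<forall>i\<in>{3..m}. \<bar>w i\<bar> \<le> c)"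
definition near :: "real \<Rightarrow> (nat \<Rightarrow> real) \<Rightarrow> (nat \<Rightarrow> real) \<Rightarrow> bool" where
  "near d w w' \<longleftrightarrow> (\<forall>i\<in>{3..m}. \<bar>w i - w' i\<bar> \<le> d)"

lemma near_nonneg: "near d w w' \<Longrightarrow> 0 \<le> d"
  unfolding near_def using m3 by (metis abs_ge_zero atLeastAtMost_iff le_refl order_trans)

lemma near_sym: "near d w w' \<Longrightarrow> near d w' w"
  unfolding near_def by (simp add: abs_minus_commute)

lemma near_mono: "near d w w' \<Longrightarrow> d \<le> d' \<Longrightarrow> near d' w w'"
  unfolding near_def by fastforce

lemma near_trans: "near d w w' \<Longrightarrow> near d' w' w'' \<Longrightarrow> near (d + d') w w''"
  unfolding near_def by (smt (verit, best))

lemma bx_near: "bx c w \<Longrightarrow> bx c' w' \<Longrightarrow> near (c + c') w w'"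
  unfolding near_def bx_def by (smt (verit, best))

lemma bx_mono: "bx c w \<Longrightarrow> c \<le> c' \<Longrightarrow> bx c' w"
  unfolding bx_def by fastforce

lemma bx_zero: "0 \<le> c \<Longrightarrow> bx c (\<lambda>_. 0)" unfolding bx_def by simp

lemma box_upd: "bx K w \<Longrightarrow> \<bar>s\<bar> \<le> K \<Longrightarrow> \<forall>l\<in>{2..m}. \<bar>(w(2 := s)) l\<bar> \<le> K"
  unfolding bx_def by (auto simp: le_Suc_eq)

lemma near_upd: "near d w w' \<Longrightarrow> \<forall>l\<in>{2..m}. \<bar>(w(2 := s)) l - (w'(2 := s)) l\<bar> \<le> d"
  using near_nonneg[of d w w'] unfolding near_def
  by (auto simp: le_Suc_eq)

lemma V_split: "{2..m} = insert 2 {3..m}" using m3 by auto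

lemma eta_ex: "\<exists>\<eta>>0. \<eta> \<le> 1 \<and> (\<forall>z. (\<forall>l\<in>{2..m}. \<bar>z l\<bar> \<le> \<eta>) \<longrightarrow> (\<forall>i\<in>{3..m}. (\<Sum>j\<in>{3..m}. \<bar>PD i j z\<bar>) \<le> 3/4))"
proof -
  have "\<exists>L\<ge>0. \<forall>p\<in>{3..m}\<times>{3..m}. (\<forall>z d. (\<forall>l\<in>{2..m}. \<bar>z l\<bar> \<le> 1) \<longrightarrow> (\<forall>l\<in>{2..m}. \<bar>z l - 0\<bar> \<le> d) \<longrightarrow>
        \<bar>PD (fst p) (snd p) z - PD (fst p) (snd p) (\<lambda>_. 0)\<bar> \<le> L * d)"
  proof (rule finite_unif)
    fix p :: "nat \<times> nat" assume p: "p \<in> {3..m}\<times>{3..m}"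
    obtain C L where CL: "C \<ge> 0" "L \<ge> 0" and CL3: "\<forall>z z' d. (\<forall>l\<in>{2..m}. \<bar>z l\<bar> \<le> 1) \<longrightarrow> (\<forall>l\<in>{2..m}. \<bar>z' l\<bar> \<le> 1)
     \<longrightarrow> (\<forall>l\<in>{2..m}. \<bar>z l - z' l\<bar> \<le> d) \<longrightarrow> \<bar>PD (fst p) (snd p) z\<bar> \<le> C \<and> \<bar>PD (fst p) (snd p) z - PD (fst p) (snd p) z'\<bar> \<le> L * d"
    proof -
      have "fst p \<le> m" using p by auto
      from pf_lip[OF PD(1)[where i="fst p" and l="snd p", OF this], where K=1]
      show ?thesis using that by blast
    qed
    show "\<exists>L\<ge>0. \<forall>z d. (\<forall>l\<in>{2..m}. \<bar>z l\<bar> \<le> 1) \<longrightarrow> (\<forall>l\<in>{2..m}. \<bar>z l - 0\<bar> \<le> d) \<longrightarrow>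
        \<bar>PD (fst p) (snd p) z - PD (fst p) (snd p) (\<lambda>_. 0)\<bar> \<le> L * d"
      using CL CL3 by (intro exI[of _ L]) auto
  next
    fix p L L' assume "\<forall>z d. (\<forall>l\<in>{2..m}. \<bar>z l\<bar> \<le> 1) \<longrightarrow> (\<forall>l\<in>{2..m}. \<bar>z l - 0\<bar> \<le> d) \<longrightarrow>
        \<bar>PD (fst p) (snd p) z - PD (fst p) (snd p) (\<lambda>_. 0)\<bar> \<le> L * d" "L \<le> L'"
    then show "\<forall>z d. (\<forall>l\<in>{2..m}. \<bar>z l\<bar> \<le> 1) \<longrightarrow> (\<forall>l\<in>{2..m}. \<bar>z l - 0\<bar> \<le> d) \<longrightarrow>
        \<bar>PD (fst p) (snd p) z - PD (fst p) (snd p) (\<lambda>_. 0)\<bar> \<le> L' * d"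
    proof (intro allI impI)
      fix z :: "nat \<Rightarrow> real" and d :: real assume h: "\<forall>z d. (\<forall>l\<in>{2..m}. \<bar>z l\<bar> \<le> 1) \<longrightarrow> (\<forall>l\<in>{2..m}. \<bar>z l - 0\<bar> \<le> d) \<longrightarrow>
        \<bar>PD (fst p) (snd p) z - PD (fst p) (snd p) (\<lambda>_. 0)\<bar> \<le> L * d" "L \<le> L'"
        and z: "\<forall>l\<in>{2..m}. \<bar>z l\<bar> \<le> 1" "\<forall>l\<in>{2..m}. \<bar>z l - 0\<bar> \<le> d"
      have "2 \<in> {2..m}" using m3 by auto
      then have "\<bar>z 2 - 0\<bar> \<le> d" using z(2) by blast
      then have d0: "0 \<le> d" using abs_ge_zero[of "z 2 - 0"] by linarith
      have "\<bar>PD (fst p) (snd p) z - PD (fst p) (snd p) (\<lambda>_. 0)\<bar> \<le> L * d" using h(1) z by blast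
      also have "\<dots> \<le> L' * d" using h(2) d0 by (rule mult_right_mono)
      finally show "\<bar>PD (fst p) (snd p) z - PD (fst p) (snd p) (\<lambda>_. 0)\<bar> \<le> L' * d" .
    qed
  qed simp
  then obtain L where L: "L \<ge> 0" "\<forall>i\<in>{3..m}. \<forall>j\<in>{3..m}. \<forall>z d. (\<forall>l\<in>{2..m}. \<bar>z l\<bar> \<le> 1) \<longrightarrow> (\<forall>l\<in>{2..m}. \<bar>z l - 0\<bar> \<le> d) \<longrightarrow>
        \<bar>PD i j z - PD i j (\<lambda>_. 0)\<bar> \<le> L * d" by auto
  define n where "n = real (card {3..m})"
  have n0: "0 \<le> n" unfolding n_def by simp
  define \<eta> where "\<eta> = min 1 (1 / (4 * (L + 1) * (n + 1)))"
  have pos4: "0 < 4 * (L + 1) * (n + 1)" using L n0 by (intro mult_pos_pos) auto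
  have eta: "0 < \<eta>" "\<eta> \<le> 1" unfolding \<eta>_def using pos4 by auto
  have etaL: "n * (L * \<eta>) \<le> 1/4"
  proof -
    have "n * (L * \<eta>) \<le> (n + 1) * ((L + 1) * (1 / (4 * (L + 1) * (n + 1))))"
      using L n0 eta unfolding \<eta>_def by (intro mult_mono) auto
    also have "\<dots> = 1/4" using pos4 by (simp add: field_simps)
    finally show ?thesis .
  qed
  have diag: "(\<Sum>j\<in>{3..m}. \<bar>PD i j (\<lambda>_. 0)\<bar>) \<le> 1/2" if i: "i \<in> {3..m}" for i
  proof -
    have "(\<Sum>j\<in>{3..m}. \<bar>PD i j (\<lambda>_. 0)\<bar>) = (\<Sum>j\<in>{3..m}. if i = j then real b ^ 2 / real b ^ i else 0)"
      using i by (intro sum.cong) (auto simp: PD_zero)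
    also have "\<dots> = real b ^ 2 / real b ^ i" using i by simp
    also have "\<dots> \<le> 1/2"
    proof -
      have ieq: "i = 2 + (i - 2)" using i by auto
      have "real b ^ i = real b ^ 2 * real b ^ (i - 2)" by (metis ieq power_add)
      moreover have "real b ^ (i - 2) \<ge> 2"
      proof -
        have "real b ^ (i - 2) \<ge> real b ^ 1" using i b2 by (intro power_increasing) auto
        then have "real b \<le> real b ^ (i - 2)" by (simp only: power_one_right)
        moreover have "2 \<le> real b" using b2 by simp
        ultimately show ?thesis by linarith
      qed
      ultimately show ?thesis using bpos by (simp add: field_simps)
    qed
    finally show ?thesis .
  qed
  show ?thesis
  proof (intro exI[of _ \<eta>] conjI allI impI ballI eta)
    fix z i assume z: "\<forall>l\<in>{2..m}. \<bar>z l\<bar> \<le> \<eta>" and i: "i \<in> {3..m}"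
    have "(\<Sum>j\<in>{3..m}. \<bar>PD i j z\<bar>) \<le> (\<Sum>j\<in>{3..m}. \<bar>PD i j (\<lambda>_. 0)\<bar> + L * \<eta>)"
    proof (intro sum_mono)
      fix j assume j: "j \<in> {3..m}"
      have z1: "\<forall>l\<in>{2..m}. \<bar>z l\<bar> \<le> 1" using z eta(2) by force
      have z2: "\<forall>l\<in>{2..m}. \<bar>z l - 0\<bar> \<le> \<eta>" using z by simp
      have "\<bar>PD i j z - PD i j (\<lambda>_. 0)\<bar> \<le> L * \<eta>"
        using L(2) i j z1 z2 by blast
      then show "\<bar>PD i j z\<bar> \<le> \<bar>PD i j (\<lambda>_. 0)\<bar> + L * \<eta>" by linarith
    qed
    also have "\<dots> = (\<Sum>j\<in>{3..m}. \<bar>PD i j (\<lambda>_. 0)\<bar>) + n * (L * \<eta>)"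
      unfolding n_def by (simp add: sum.distrib)
    also have "\<dots> \<le> 1/2 + 1/4" using diag[OF i] etaL by linarith
    finally show "(\<Sum>j\<in>{3..m}. \<bar>PD i j z\<bar>) \<le> 3/4" by simp
  qed
qed

end

context L3 begin

definition eta where "eta = (SOME \<eta>. 0 < \<eta> \<and> \<eta> \<le> 1 \<and> (\<forall>z. (\<forall>l\<in>{2..m}. \<bar>z l\<bar> \<le> \<eta>) \<longrightarrow> (\<forall>i\<in>{3..m}. (\<Sum>j\<in>{3..m}. \<bar>PD i j z\<bar>) \<le> 3/4)))"

lemma eta: "0 < eta" "eta \<le> 1" "\<And>z. (\<forall>l\<in>{2..m}. \<bar>z l\<bar> \<le> eta) \<Longrightarrow> (\<forall>i\<in>{3..m}. (\<Sum>j\<in>{3..m}. \<bar>PD i j z\<bar>) \<le> 3/4)"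
proof -
  from eta_ex obtain \<eta> where "0 < \<eta> \<and> \<eta> \<le> 1 \<and> (\<forall>z. (\<forall>l\<in>{2..m}. \<bar>z l\<bar> \<le> \<eta>) \<longrightarrow> (\<forall>i\<in>{3..m}. (\<Sum>j\<in>{3..m}. \<bar>PD i j z\<bar>) \<le> 3/4))"
    by blast
  then have *: "0 < eta \<and> eta \<le> 1 \<and> (\<forall>z. (\<forall>l\<in>{2..m}. \<bar>z l\<bar> \<le> eta) \<longrightarrow> (\<forall>i\<in>{3..m}. (\<Sum>j\<in>{3..m}. \<bar>PD i j z\<bar>) \<le> 3/4))"
    unfolding eta_def by (rule someI)
  then show "0 < eta" "eta \<le> 1" by auto
  show "\<And>z. (\<forall>l\<in>{2..m}. \<bar>z l\<bar> \<le> eta) \<Longrightarrow> (\<forall>i\<in>{3..m}. (\<Sum>j\<in>{3..m}. \<bar>PD i j z\<bar>) \<le> 3/4)"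
    using * by blast
qed

lemma Pvec_contr0:
  assumes s: "\<bar>s\<bar> \<le> eta" and w: "bx eta w" and w': "bx eta w'" and d: "near d w w'"
  shows "near (3/4 * d) (Pvec b m s w) (Pvec b m s w')"
  unfolding near_def
proof
  fix i assume i: "i \<in> {3..m}"
  define Z where "Z \<tau> = (\<lambda>l. w l + \<tau> * (w' l - w l))(2 := s)" for \<tau> :: real
  define Z' where "Z' l = (if l = 2 then 0 else w' l - w l)" for l
  define \<phi>' where "\<phi>' \<tau> = (\<Sum>l\<in>{2..m}. PD i l (Z \<tau>) * Z' l)" for \<tau>
  have im: "i \<le> m" using i by auto
  have der: "((\<lambda>\<tau>. P b i (Z \<tau>)) has_real_derivative \<phi>' \<tau>) (at \<tau>)" for \<tau>
    unfolding \<phi>'_def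
  proof (rule PD(2)[OF im])
    fix l assume l: "l \<in> {2..m}"
    show "((\<lambda>\<tau>. Z \<tau> l) has_real_derivative Z' l) (at \<tau>)"
      unfolding Z_def Z'_def by (cases "l = 2") (auto intro!: derivative_eq_intros)
  qed
  obtain \<xi> where \<xi>: "0 < \<xi>" "\<xi> < 1" "P b i (Z 1) - P b i (Z 0) = (1 - 0) * \<phi>' \<xi>"
    using MVT2[of 0 1 "\<lambda>\<tau>. P b i (Z \<tau>)" \<phi>'] der by auto
  have Z0: "Z 0 = w(2 := s)" and Z1: "Z 1 = w'(2 := s)" unfolding Z_def by auto
  have box: "\<forall>l\<in>{2..m}. \<bar>Z \<xi> l\<bar> \<le> eta"
  proof
    fix l assume l: "l \<in> {2..m}"
    show "\<bar>Z \<xi> l\<bar> \<le> eta"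
    proof (cases "l = 2")
      case True then show ?thesis using s unfolding Z_def by simp
    next
      case False
      then have l3: "l \<in> {3..m}" using l by auto
      have "Z \<xi> l = (1 - \<xi>) * w l + \<xi> * w' l" unfolding Z_def using False by (simp add: algebra_simps)
      also have "\<bar>\<dots>\<bar> \<le> (1 - \<xi>) * \<bar>w l\<bar> + \<xi> * \<bar>w' l\<bar>"
      proof -
        have "\<bar>(1 - \<xi>) * w l + \<xi> * w' l\<bar> \<le> \<bar>(1 - \<xi>) * w l\<bar> + \<bar>\<xi> * w' l\<bar>" by (rule abs_triangle_ineq)
        also have "\<dots> = (1 - \<xi>) * \<bar>w l\<bar> + \<xi> * \<bar>w' l\<bar>" using \<xi> by (simp add: abs_mult)
        finally show ?thesis .
      qed
      also have "\<dots> \<le> (1 - \<xi>) * eta + \<xi> * eta"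
        using w w' l3 \<xi> unfolding bx_def by (intro add_mono mult_left_mono) auto
      finally show ?thesis by (simp add: algebra_simps)
    qed
  qed
  have "\<phi>' \<xi> = (\<Sum>j\<in>{3..m}. PD i j (Z \<xi>) * (w' j - w j))"
    unfolding \<phi>'_def V_split Z'_def by (simp add: sum.insert)
  then have "\<bar>\<phi>' \<xi>\<bar> \<le> (\<Sum>j\<in>{3..m}. \<bar>PD i j (Z \<xi>)\<bar> * \<bar>w' j - w j\<bar>)"
    by (simp add: abs_mult order_trans[OF sum_abs])
  also have "\<dots> \<le> (\<Sum>j\<in>{3..m}. \<bar>PD i j (Z \<xi>)\<bar> * d)"
    using d unfolding near_def by (intro sum_mono mult_left_mono) (auto simp: abs_minus_commute)
  also have "\<dots> = (\<Sum>j\<in>{3..m}. \<bar>PD i j (Z \<xi>)\<bar>) * d" by (simp add: sum_distrib_right)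
  also have "\<dots> \<le> 3/4 * d" using eta(3)[OF box] i near_nonneg[OF d] by (intro mult_right_mono) auto
  finally have "\<bar>\<phi>' \<xi>\<bar> \<le> 3/4 * d" .
  moreover have "Pvec b m s w i - Pvec b m s w' i = - (P b i (Z 1) - P b i (Z 0))"
    using i unfolding Pvec_eq[OF i] Z0 Z1 by simp
  ultimately show "\<bar>Pvec b m s w i - Pvec b m s w' i\<bar> \<le> 3/4 * d" using \<xi>(3) by simp
qed

lemma Pvec_zero_ex: "\<exists>L\<ge>0. \<forall>i\<in>{3..m}. \<forall>s. \<bar>s\<bar> \<le> 1 \<longrightarrow> \<bar>Pvec b m s (\<lambda>_. 0) i\<bar> \<le> L * \<bar>s\<bar>"
proof (rule finite_unif)
  fix i assume i: "i \<in> {3..m}"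
  obtain C L where CL: "C \<ge> 0" "L \<ge> 0" and CL3: "\<forall>z z' d. (\<forall>l\<in>{2..m}. \<bar>z l\<bar> \<le> 1) \<longrightarrow> (\<forall>l\<in>{2..m}. \<bar>z' l\<bar> \<le> 1)
     \<longrightarrow> (\<forall>l\<in>{2..m}. \<bar>z l - z' l\<bar> \<le> d) \<longrightarrow> \<bar>P b i z\<bar> \<le> C \<and> \<bar>P b i z - P b i z'\<bar> \<le> L * d"
    using pf_lip[OF P_pf, of i 1] i by auto
  have "\<bar>Pvec b m s (\<lambda>_. 0) i\<bar> \<le> L * \<bar>s\<bar>" if s: "\<bar>s\<bar> \<le> 1" for s
  proof -
    have "\<bar>P b i ((\<lambda>_. 0)(2 := s)) - P b i (\<lambda>_. 0)\<bar> \<le> L * \<bar>s\<bar>"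
      using CL3 s by auto
    then show ?thesis using i P_zero[of i] by (simp add: Pvec_eq)
  qed
  then show "\<exists>L\<ge>0. \<forall>s. \<bar>s\<bar> \<le> 1 \<longrightarrow> \<bar>Pvec b m s (\<lambda>_. 0) i\<bar> \<le> L * \<bar>s\<bar>" using CL by blast
next
  fix i L L' assume "\<forall>s. \<bar>s\<bar> \<le> 1 \<longrightarrow> \<bar>Pvec b m s (\<lambda>_. 0) i\<bar> \<le> L * \<bar>s\<bar>" "L \<le> L'"
  then show "\<forall>s. \<bar>s\<bar> \<le> 1 \<longrightarrow> \<bar>Pvec b m s (\<lambda>_. 0) i\<bar> \<le> L' * \<bar>s\<bar>"
    by (meson abs_ge_zero mult_right_mono order_trans)
qed simp

definition Lz where "Lz = (SOME L. L \<ge> 0 \<and> (\<forall>i\<in>{3..m}. \<forall>s. \<bar>s\<bar> \<le> 1 \<longrightarrow> \<bar>Pvec b m s (\<lambda>_. 0) i\<bar> \<le> L * \<bar>s\<bar>))"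

lemma Lz: "0 \<le> Lz" "\<And>i s. i \<in> {3..m} \<Longrightarrow> \<bar>s\<bar> \<le> 1 \<Longrightarrow> \<bar>Pvec b m s (\<lambda>_. 0) i\<bar> \<le> Lz * \<bar>s\<bar>"
proof -
  from Pvec_zero_ex obtain L where "L \<ge> 0 \<and> (\<forall>i\<in>{3..m}. \<forall>s. \<bar>s\<bar> \<le> 1 \<longrightarrow> \<bar>Pvec b m s (\<lambda>_. 0) i\<bar> \<le> L * \<bar>s\<bar>)"
    by blast
  then have *: "Lz \<ge> 0 \<and> (\<forall>i\<in>{3..m}. \<forall>s. \<bar>s\<bar> \<le> 1 \<longrightarrow> \<bar>Pvec b m s (\<lambda>_. 0) i\<bar> \<le> Lz * \<bar>s\<bar>)"
    unfolding Lz_def by (rule someI)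
  then show "0 \<le> Lz" by simp
  show "\<And>i s. i \<in> {3..m} \<Longrightarrow> \<bar>s\<bar> \<le> 1 \<Longrightarrow> \<bar>Pvec b m s (\<lambda>_. 0) i\<bar> \<le> Lz * \<bar>s\<bar>" using * by blast
qed

definition eps where "eps = eta"
definition del where "del = min eta (eta / (4 * (Lz + 1)))"
abbreviation q where "q \<equiv> (3/4 :: real)"

lemma eps_pos: "0 < eps" and eps_le1: "eps \<le> 1" and del_pos: "0 < del" and del_le: "del \<le> eps"
  using eta Lz unfolding eps_def del_def by (auto simp: add_nonneg_pos)

lemma del_Lz: "Lz * del \<le> eps / 4"
proof -
  have "Lz * del \<le> (Lz + 1) * (eta / (4 * (Lz + 1)))"
    unfolding del_def using Lz eta by (intro mult_mono) auto
  also have "\<dots> = eps / 4" unfolding eps_def using Lz by (simp add: field_simps)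
  finally show ?thesis .
qed

lemma Pvec_contr:
  assumes "0 \<le> s" "s \<le> del" "bx eps w" "bx eps w'" "near d w w'"
  shows "near (q * d) (Pvec b m s w) (Pvec b m s w')"
  using assms del_le by (intro Pvec_contr0) (auto simp: eps_def)

lemma Pvec_into:
  assumes s: "0 \<le> s" "s \<le> del" and w: "bx eps w"
  shows "bx eps (Pvec b m s w)"
  unfolding bx_def
proof
  fix i assume i: "i \<in> {3..m}"
  have "near (q * (eps + 0)) (Pvec b m s w) (Pvec b m s (\<lambda>_. 0))"
    using s w eps_pos by (intro Pvec_contr bx_near bx_zero) auto
  then have "\<bar>Pvec b m s w i - Pvec b m s (\<lambda>_. 0) i\<bar> \<le> q * eps" using i unfolding near_def by simp
  moreover have "\<bar>Pvec b m s (\<lambda>_. 0) i\<bar> \<le> Lz * s"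
    using Lz(2)[OF i, of s] s del_le eps_le1 by simp
  moreover have "Lz * s \<le> eps / 4"
    using del_Lz Lz s by (meson mult_left_mono order_trans)
  ultimately show "\<bar>Pvec b m s w i\<bar> \<le> eps" by linarith
qed

lemma DP_row:
  assumes s: "0 \<le> s" "s \<le> del" and w: "bx eps w" and i: "i \<in> {3..m}"
  shows "(\<Sum>j\<in>{3..m}. \<bar>DP b m s w i j\<bar>) \<le> q"
proof -
  have "\<forall>l\<in>{2..m}. \<bar>(w(2 := s)) l\<bar> \<le> eta"
    using box_upd[of eta w s] w s del_le unfolding eps_def by auto
  from eta(3)[OF this] i have "(\<Sum>j\<in>{3..m}. \<bar>PD i j (w(2 := s))\<bar>) \<le> q" by blast
  then show ?thesis using i by (simp add: DP_eq)
qed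

lemma Fcomp_into: "0 \<le> x \<Longrightarrow> x \<le> del \<Longrightarrow> bx eps w \<Longrightarrow> bx eps (Fcomp b m x n w)"
proof (induction n arbitrary: x)
  case (Suc n)
  have "0 \<le> Mb_inv b x" "Mb_inv b x \<le> del" using Suc.prems Mbinv_nonneg Mbinv_le by (auto intro: order_trans)
  then show ?case using Suc by (simp add: Fcomp_Suc Pvec_into)
qed simp

lemma Fcomp_contr: "0 \<le> x \<Longrightarrow> x \<le> del \<Longrightarrow> bx eps w \<Longrightarrow> bx eps w' \<Longrightarrow> near d w w' \<Longrightarrow>
   near (q ^ n * d) (Fcomp b m x n w) (Fcomp b m x n w')"
proof (induction n arbitrary: x)
  case (Suc n)
  have x1: "0 \<le> Mb_inv b x" "Mb_inv b x \<le> del" using Suc.prems Mbinv_nonneg Mbinv_le by (auto intro: order_trans)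
  have "near (q * (q ^ n * d)) (Pvec b m (Mb_inv b x) (Fcomp b m (Mb_inv b x) n w)) (Pvec b m (Mb_inv b x) (Fcomp b m (Mb_inv b x) n w'))"
    using x1 Suc by (intro Pvec_contr Fcomp_into) auto
  then show ?case by (simp add: Fcomp_Suc mult.assoc)
qed simp

lemma Pvec_lip:
  assumes R: "0 \<le> R" and K: "0 \<le> K"
  shows "\<exists>L\<ge>0. \<forall>s\<in>{0..R}. \<forall>w w' d. bx K w \<longrightarrow> bx K w' \<longrightarrow> near d w w' \<longrightarrow>
     bx L (Pvec b m s w) \<and> near (L * d) (Pvec b m s w) (Pvec b m s w')"
proof -
  have "\<exists>L\<ge>0. \<forall>i\<in>{3..m}. \<forall>s\<in>{0..R}. \<forall>w w' d. bx K w \<longrightarrow> bx K w' \<longrightarrow> near d w w' \<longrightarrow>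
     \<bar>Pvec b m s w i\<bar> \<le> L \<and> \<bar>Pvec b m s w i - Pvec b m s w' i\<bar> \<le> L * d"
  proof (rule finite_unif)
    fix i assume i: "i \<in> {3..m}"
    obtain C L where CL: "C \<ge> 0" "L \<ge> 0" and CL3: "\<forall>z z' d. (\<forall>l\<in>{2..m}. \<bar>z l\<bar> \<le> max R K) \<longrightarrow> (\<forall>l\<in>{2..m}. \<bar>z' l\<bar> \<le> max R K)
       \<longrightarrow> (\<forall>l\<in>{2..m}. \<bar>z l - z' l\<bar> \<le> d) \<longrightarrow> \<bar>P b i z\<bar> \<le> C \<and> \<bar>P b i z - P b i z'\<bar> \<le> L * d"
      using pf_lip[OF P_pf, of i "max R K"] i by auto
    have "\<bar>Pvec b m s w i\<bar> \<le> max C L \<and> \<bar>Pvec b m s w i - Pvec b m s w' i\<bar> \<le> max C L * d"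
      if s: "s \<in> {0..R}" and w: "bx K w" "bx K w'" and d: "near d w w'" for s w w' d
    proof -
      have bz: "\<forall>l\<in>{2..m}. \<bar>(w(2 := s)) l\<bar> \<le> max R K" "\<forall>l\<in>{2..m}. \<bar>(w'(2 := s)) l\<bar> \<le> max R K"
      proof -
        have w1: "bx (max R K) w" "bx (max R K) w'" using w by (auto intro: bx_mono)
        have s1: "\<bar>s\<bar> \<le> max R K" using s by auto
        show "\<forall>l\<in>{2..m}. \<bar>(w(2 := s)) l\<bar> \<le> max R K" by (rule box_upd[OF w1(1) s1])
        show "\<forall>l\<in>{2..m}. \<bar>(w'(2 := s)) l\<bar> \<le> max R K" by (rule box_upd[OF w1(2) s1])
      qed
      have "\<bar>P b i (w(2 := s))\<bar> \<le> C \<and> \<bar>P b i (w(2 := s)) - P b i (w'(2 := s))\<bar> \<le> L * d"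
        using CL3 bz near_upd[OF d] by blast
      moreover have "L * d \<le> max C L * d" using near_nonneg[OF d] by (intro mult_right_mono) auto
      ultimately show ?thesis using i by (auto simp: Pvec_eq)
    qed
    then show "\<exists>L\<ge>0. \<forall>s\<in>{0..R}. \<forall>w w' d. bx K w \<longrightarrow> bx K w' \<longrightarrow> near d w w' \<longrightarrow>
     \<bar>Pvec b m s w i\<bar> \<le> L \<and> \<bar>Pvec b m s w i - Pvec b m s w' i\<bar> \<le> L * d"
      using CL by (intro exI[of _ "max C L"]) auto
  next
    fix i L L' assume h: "\<forall>s\<in>{0..R}. \<forall>w w' d. bx K w \<longrightarrow> bx K w' \<longrightarrow> near d w w' \<longrightarrow>
     \<bar>Pvec b m s w i\<bar> \<le> L \<and> \<bar>Pvec b m s w i - Pvec b m s w' i\<bar> \<le> L * d" "L \<le> L'"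
    show "\<forall>s\<in>{0..R}. \<forall>w w' d. bx K w \<longrightarrow> bx K w' \<longrightarrow> near d w w' \<longrightarrow>
     \<bar>Pvec b m s w i\<bar> \<le> L' \<and> \<bar>Pvec b m s w i - Pvec b m s w' i\<bar> \<le> L' * d"
    proof (intro ballI allI impI)
      fix s w w' d assume "s \<in> {0..R}" "bx K w" "bx K w'" "near d w w'"
      moreover have "L * d \<le> L' * d" using near_nonneg[OF \<open>near d w w'\<close>] h(2) by (intro mult_right_mono)
      ultimately show "\<bar>Pvec b m s w i\<bar> \<le> L' \<and> \<bar>Pvec b m s w i - Pvec b m s w' i\<bar> \<le> L' * d"
        using h by fastforce
    qed
  qed simp
  then show ?thesis unfolding bx_def near_def by (metis)
qed

lemma Fcomp_lip:
  assumes R: "0 \<le> R"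
  shows "0 \<le> K \<Longrightarrow> \<exists>K' L. 0 \<le> K' \<and> 0 \<le> L \<and> (\<forall>x\<in>{0..R}. \<forall>w w' d. bx K w \<longrightarrow> bx K w' \<longrightarrow> near d w w' \<longrightarrow>
     bx K' (Fcomp b m x N w) \<and> near (L * d) (Fcomp b m x N w) (Fcomp b m x N w'))"
proof (induction N)
  case 0 then show ?case by (intro exI[of _ K] exI[of _ 1]) auto
next
  case (Suc N)
  then obtain K1 L1 where K1: "0 \<le> K1" "0 \<le> L1" "\<forall>x\<in>{0..R}. \<forall>w w' d. bx K w \<longrightarrow> bx K w' \<longrightarrow> near d w w' \<longrightarrow>
     bx K1 (Fcomp b m x N w) \<and> near (L1 * d) (Fcomp b m x N w) (Fcomp b m x N w')" by blast
  obtain L2 where L2: "0 \<le> L2" "\<forall>s\<in>{0..R}. \<forall>w w' d. bx K1 w \<longrightarrow> bx K1 w' \<longrightarrow> near d w w' \<longrightarrow>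
     bx L2 (Pvec b m s w) \<and> near (L2 * d) (Pvec b m s w) (Pvec b m s w')"
    using Pvec_lip[OF R K1(1)] by blast
  have main: "\<forall>x\<in>{0..R}. \<forall>w w' d. bx K w \<longrightarrow> bx K w' \<longrightarrow> near d w w' \<longrightarrow>
     bx L2 (Fcomp b m x (Suc N) w) \<and> near (L2 * L1 * d) (Fcomp b m x (Suc N) w) (Fcomp b m x (Suc N) w')"
  proof (intro ballI allI impI)
    fix x w w' d assume x: "x \<in> {0..R}" and w: "bx K w" "bx K w'" and d: "near d w w'"
    have x1: "Mb_inv b x \<in> {0..R}" using x Mbinv_nonneg Mbinv_le by (auto intro: order_trans)
    have i1: "bx K1 (Fcomp b m (Mb_inv b x) N w)" "bx K1 (Fcomp b m (Mb_inv b x) N w')"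
      "near (L1 * d) (Fcomp b m (Mb_inv b x) N w) (Fcomp b m (Mb_inv b x) N w')"
    proof -
      have A: "bx K1 (Fcomp b m (Mb_inv b x) N w) \<and> near (L1 * d) (Fcomp b m (Mb_inv b x) N w) (Fcomp b m (Mb_inv b x) N w')"
        using K1(3) x1 w d by blast
      have B: "bx K1 (Fcomp b m (Mb_inv b x) N w') \<and> near (L1 * d) (Fcomp b m (Mb_inv b x) N w') (Fcomp b m (Mb_inv b x) N w)"
        using K1(3) x1 w near_sym[OF d] by blast
      show "bx K1 (Fcomp b m (Mb_inv b x) N w)" "bx K1 (Fcomp b m (Mb_inv b x) N w')"
        "near (L1 * d) (Fcomp b m (Mb_inv b x) N w) (Fcomp b m (Mb_inv b x) N w')" using A B by auto
    qed
    have "bx L2 (Fcomp b m x (Suc N) w)" using L2(2) x1 i1 by (simp add: Fcomp_Suc)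
    moreover have "near (L2 * L1 * d) (Fcomp b m x (Suc N) w) (Fcomp b m x (Suc N) w')"
      using L2(2) x1 i1 by (simp add: Fcomp_Suc mult.assoc)
    ultimately show "bx L2 (Fcomp b m x (Suc N) w) \<and> near (L2 * L1 * d) (Fcomp b m x (Suc N) w) (Fcomp b m x (Suc N) w')" ..
  qed
  show ?case using main K1 L2 by (intro exI[of _ L2] exI[of _ "L2 * L1"]) auto
qed

end

lemma small_pow:
  fixes C e :: real assumes C: "0 \<le> C" and e: "0 < e"
  shows "\<exists>k0. \<forall>k\<ge>k0. C * (3/4) ^ k < e"
proof -
  obtain k0 where k0: "(3/4::real) ^ k0 < e / (C + 1)"
    using real_arch_pow_inv[of "e / (C + 1)" "3/4"] C e by auto
  have "C * (3/4) ^ k < e" if k: "k \<ge> k0" for k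
  proof -
    have "C * (3/4::real) ^ k \<le> (C + 1) * (3/4) ^ k0"
      using C k by (intro mult_mono power_decreasing) auto
    also have "\<dots> < (C + 1) * (e / (C + 1))" using C k0 by (intro mult_strict_left_mono) auto
    also have "\<dots> = e" using C by simp
    finally show ?thesis .
  qed
  then show ?thesis by blast
qed

context L3 begin

lemma Fcomp_bound:
  assumes R: "0 \<le> R"
  shows "\<exists>K\<ge>0. \<forall>x\<in>{0..R}. \<forall>n y. bx eps y \<longrightarrow> bx K (Fcomp b m x n y)"
proof -
  obtain N0 where N0: "\<forall>n\<ge>N0. \<forall>x\<in>{0..R}. T n x \<le> del" using T_small[OF R del_pos] by blast
  have "\<exists>K\<ge>0. \<forall>n\<in>{..N0}. \<forall>x\<in>{0..R}. \<forall>y. bx eps y \<longrightarrow> bx K (Fcomp b m x n y)"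
  proof (rule finite_unif)
    fix n assume "n \<in> {..N0}"
    obtain K' L where "0 \<le> K'" "\<forall>x\<in>{0..R}. \<forall>w w' d. bx eps w \<longrightarrow> bx eps w' \<longrightarrow> near d w w' \<longrightarrow>
      bx K' (Fcomp b m x n w) \<and> near (L * d) (Fcomp b m x n w) (Fcomp b m x n w')"
      using Fcomp_lip[OF R, of eps n] eps_pos by auto
    moreover have "near 0 y y" for y unfolding near_def by simp
    ultimately show "\<exists>K\<ge>0. \<forall>x\<in>{0..R}. \<forall>y. bx eps y \<longrightarrow> bx K (Fcomp b m x n y)" by blast
  qed (auto intro: bx_mono)
  then obtain K where K: "K \<ge> 0" "\<forall>n\<in>{..N0}. \<forall>x\<in>{0..R}. \<forall>y. bx eps y \<longrightarrow> bx K (Fcomp b m x n y)" by blast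
  have "bx K (Fcomp b m x n y)" if x: "x \<in> {0..R}" and y: "bx eps y" for x n y
  proof (cases "n \<le> N0")
    case True then show ?thesis using K x y by auto
  next
    case False
    then have n: "n = N0 + (n - N0)" by simp
    have X: "0 \<le> T N0 x" "T N0 x \<le> del" using N0 x T_nonneg by auto
    have "bx eps (Fcomp b m (T N0 x) (n - N0) y)" using X y by (rule Fcomp_into)
    then have "bx K (Fcomp b m x N0 (Fcomp b m (T N0 x) (n - N0) y))" using K x by auto
    then show ?thesis by (subst n, subst Fcomp_add) 
  qed
  then show ?thesis using K by blast
qed

lemma conv:
  assumes R: "0 \<le> R"
  shows "\<exists>N0 C. 0 \<le> C \<and> (\<forall>x\<in>{0..R}. \<forall>k p w w'. bx eps w \<longrightarrow> bx eps w' \<longrightarrow>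
     near (C * q ^ k) (Fcomp b m x (N0 + k) w) (Fcomp b m x (N0 + k + p) w'))"
proof -
  obtain N0 where N0: "\<forall>n\<ge>N0. \<forall>x\<in>{0..R}. T n x \<le> del" using T_small[OF R del_pos] by blast
  obtain K' L where KL: "0 \<le> K'" "0 \<le> L" "\<forall>x\<in>{0..R}. \<forall>w w' d. bx eps w \<longrightarrow> bx eps w' \<longrightarrow> near d w w' \<longrightarrow>
      bx K' (Fcomp b m x N0 w) \<and> near (L * d) (Fcomp b m x N0 w) (Fcomp b m x N0 w')"
    using Fcomp_lip[OF R, of eps N0] eps_pos by auto
  have "near (2 * L * eps * q ^ k) (Fcomp b m x (N0 + k) w) (Fcomp b m x (N0 + k + p) w')"
    if x: "x \<in> {0..R}" and w: "bx eps w" "bx eps w'" for x k p w w'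
  proof -
    define X where "X = T N0 x"
    have X: "0 \<le> X" "X \<le> del" unfolding X_def using N0 x T_nonneg by auto
    have TX: "0 \<le> T k X" "T k X \<le> del" using X T_nonneg T_le order_trans by blast+
    define w'' where "w'' = Fcomp b m (T k X) p w'"
    have w'': "bx eps w''" unfolding w''_def using TX w(2) by (rule Fcomp_into)
    have e1: "Fcomp b m x (N0 + k) w = Fcomp b m x N0 (Fcomp b m X k w)" unfolding X_def by (rule Fcomp_add)
    have e2: "Fcomp b m x (N0 + k + p) w' = Fcomp b m x N0 (Fcomp b m X k w'')"
      unfolding X_def w''_def by (simp add: Fcomp_add add.assoc)
    have u: "bx eps (Fcomp b m X k w)" "bx eps (Fcomp b m X k w'')" using X w w'' by (auto intro: Fcomp_into)
    have "near (q ^ k * (eps + eps)) (Fcomp b m X k w) (Fcomp b m X k w'')"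
      using X w w'' by (intro Fcomp_contr bx_near) auto
    then have "near (L * (q ^ k * (eps + eps))) (Fcomp b m x N0 (Fcomp b m X k w)) (Fcomp b m x N0 (Fcomp b m X k w''))"
      using KL(3) x u by blast
    then show ?thesis unfolding e1 e2 by (rule near_mono) (simp add: algebra_simps)
  qed
  then show ?thesis using KL eps_pos by (intro exI[of _ N0] exI[of _ "2 * L * eps"]) auto
qed

definition H :: "real \<Rightarrow> nat \<Rightarrow> real" where
  "H x = (\<lambda>i. lim (\<lambda>n. Fcomp b m x n (\<lambda>_. 0) i))"

lemma H_lim_conv:
  assumes R: "0 \<le> R"
  shows "\<exists>N0 C. 0 \<le> C \<and> (\<forall>x\<in>{0..R}. \<forall>i\<in>{3..m}. (\<lambda>n. Fcomp b m x n (\<lambda>_. 0) i) \<longlonglongrightarrow> H x i) \<and>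
     (\<forall>x\<in>{0..R}. \<forall>k w. bx eps w \<longrightarrow> near (C * q ^ k) (Fcomp b m x (N0 + k) w) (H x))"
proof -
  obtain N0 C where C: "0 \<le> C" and NC: "\<forall>x\<in>{0..R}. \<forall>k p w w'. bx eps w \<longrightarrow> bx eps w' \<longrightarrow>
     near (C * q ^ k) (Fcomp b m x (N0 + k) w) (Fcomp b m x (N0 + k + p) w')"
    using conv[OF R] by blast
  have z: "bx eps (\<lambda>_. 0)" using eps_pos by (intro bx_zero) auto
  have lim: "(\<lambda>n. Fcomp b m x n (\<lambda>_. 0) i) \<longlonglongrightarrow> H x i" if x: "x \<in> {0..R}" and i: "i \<in> {3..m}" for x i
  proof -
    have "Cauchy (\<lambda>n. Fcomp b m x n (\<lambda>_. 0) i)"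
    proof (rule metric_CauchyI)
      fix e :: real assume e: "0 < e"
      obtain k0 where k0: "\<forall>k\<ge>k0. C * q ^ k < e" using small_pow[OF C e] by blast
      have "dist (Fcomp b m x n (\<lambda>_. 0) i) (Fcomp b m x n' (\<lambda>_. 0) i) < e"
        if n: "n \<ge> N0 + k0" "n' \<ge> N0 + k0" "n \<le> n'" for n n'
      proof -
        have eq: "n = N0 + (n - N0)" "n' = N0 + (n - N0) + (n' - n)" using n by auto
        have "near (C * q ^ (n - N0)) (Fcomp b m x (N0 + (n - N0)) (\<lambda>_. 0)) (Fcomp b m x (N0 + (n - N0) + (n' - n)) (\<lambda>_. 0))"
          using NC x z by blast
        then have "\<bar>Fcomp b m x n (\<lambda>_. 0) i - Fcomp b m x n' (\<lambda>_. 0) i\<bar> \<le> C * q ^ (n - N0)"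
          using i eq unfolding near_def by metis
        moreover have "C * q ^ (n - N0) < e" using k0 n by auto
        ultimately show ?thesis by (simp add: dist_real_def)
      qed
      then show "\<exists>M. \<forall>n\<ge>M. \<forall>n'\<ge>M. dist (Fcomp b m x n (\<lambda>_. 0) i) (Fcomp b m x n' (\<lambda>_. 0) i) < e"
        by (metis dist_commute nat_le_linear)
    qed
    then have "convergent (\<lambda>n. Fcomp b m x n (\<lambda>_. 0) i)" by (simp add: Cauchy_convergent_iff)
    then show ?thesis unfolding H_def by (simp add: convergent_LIMSEQ_iff)
  qed
  have bnd: "near (C * q ^ k) (Fcomp b m x (N0 + k) w) (H x)" if x: "x \<in> {0..R}" and w: "bx eps w" for x k w
    unfolding near_def
  proof
    fix i assume i: "i \<in> {3..m}"
    have "(\<lambda>p. \<bar>Fcomp b m x (N0 + k) w i - Fcomp b m x (p + (N0 + k)) (\<lambda>_. 0) i\<bar>) \<longlonglongrightarrow> \<bar>Fcomp b m x (N0 + k) w i - H x i\<bar>"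
      by (intro tendsto_intros LIMSEQ_ignore_initial_segment[OF lim[OF x i]])
    moreover have "\<forall>p. \<bar>Fcomp b m x (N0 + k) w i - Fcomp b m x (p + (N0 + k)) (\<lambda>_. 0) i\<bar> \<le> C * q ^ k"
    proof
      fix p
      have "near (C * q ^ k) (Fcomp b m x (N0 + k) w) (Fcomp b m x (N0 + k + p) (\<lambda>_. 0))"
        using NC x w z by blast
      then show "\<bar>Fcomp b m x (N0 + k) w i - Fcomp b m x (p + (N0 + k)) (\<lambda>_. 0) i\<bar> \<le> C * q ^ k"
        using i unfolding near_def by (simp add: add.commute)
    qed
    ultimately show "\<bar>Fcomp b m x (N0 + k) w i - H x i\<bar> \<le> C * q ^ k"
      by (intro LIMSEQ_le_const2) auto
  qed
  show ?thesis using C lim bnd by blast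
qed

lemma H_lim: "0 \<le> x \<Longrightarrow> i \<in> {3..m} \<Longrightarrow> (\<lambda>n. Fcomp b m x n (\<lambda>_. 0) i) \<longlonglongrightarrow> H x i"
  using H_lim_conv[of x] by auto

lemma H_small: assumes x: "0 \<le> x" "x \<le> del" shows "bx eps (H x)"
  unfolding bx_def
proof
  fix i assume i: "i \<in> {3..m}"
  have "\<forall>n. \<bar>Fcomp b m x n (\<lambda>_. 0) i\<bar> \<le> eps"
    using Fcomp_into[OF x bx_zero] eps_pos i unfolding bx_def by auto
  then show "\<bar>H x i\<bar> \<le> eps" using H_lim[OF x(1) i]
    by (intro LIMSEQ_le_const2[of "\<lambda>n. \<bar>Fcomp b m x n (\<lambda>_. 0) i\<bar>"]) (auto intro: tendsto_intros)
qed

lemma H_bound: assumes R: "0 \<le> R" shows "\<exists>K\<ge>0. \<forall>x\<in>{0..R}. bx K (H x)"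
proof -
  obtain K where K: "K \<ge> 0" "\<forall>x\<in>{0..R}. \<forall>n y. bx eps y \<longrightarrow> bx K (Fcomp b m x n y)"
    using Fcomp_bound[OF R] by blast
  have "bx K (H x)" if x: "x \<in> {0..R}" for x
    unfolding bx_def
  proof
    fix i assume i: "i \<in> {3..m}"
    have "\<forall>n. \<bar>Fcomp b m x n (\<lambda>_. 0) i\<bar> \<le> K"
      using K x bx_zero[of eps] eps_pos i unfolding bx_def by auto
    then show "\<bar>H x i\<bar> \<le> K" using H_lim[of x i] x i
      by (intro LIMSEQ_le_const2[of "\<lambda>n. \<bar>Fcomp b m x n (\<lambda>_. 0) i\<bar>"]) (auto intro: tendsto_intros)
  qed
  then show ?thesis using K by blast
qed

lemma H_rec: assumes x: "0 \<le> x" and i: "i \<in> {3..m}" shows "H (Mb b x) i = Pvec b m x (H x) i"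
proof -
  have "(\<lambda>n. Fcomp b m (Mb b x) (Suc n) (\<lambda>_. 0) i) \<longlonglongrightarrow> H (Mb b x) i"
    using H_lim[OF Mb_nonneg[OF x] i] by (rule LIMSEQ_Suc)
  moreover have "Fcomp b m (Mb b x) (Suc n) (\<lambda>_. 0) i = P b i ((Fcomp b m x n (\<lambda>_. 0))(2 := x))" for n
    using i x by (simp add: Fcomp_Suc Mbinv_Mb Pvec_eq)
  ultimately have A: "(\<lambda>n. P b i ((Fcomp b m x n (\<lambda>_. 0))(2 := x))) \<longlonglongrightarrow> H (Mb b x) i" by simp
  have "(\<lambda>n. P b i ((Fcomp b m x n (\<lambda>_. 0))(2 := x))) \<longlonglongrightarrow> P b i ((H x)(2 := x))"
  proof (rule pf_tendsto[OF P_pf])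
    show "i \<le> m" using i by simp
    fix l assume l: "l \<in> {2..m}"
    show "(\<lambda>n. ((Fcomp b m x n (\<lambda>_. 0))(2 := x)) l) \<longlonglongrightarrow> ((H x)(2 := x)) l"
    proof (cases "l = 2")
      case False
      then have "l \<in> {3..m}" using l by auto
      then show ?thesis using H_lim[OF x] False by simp
    qed simp
  qed
  then show ?thesis using A LIMSEQ_unique i by (simp add: Pvec_eq)
qed

lemma Fcomp_mono:
  "0 \<le> x \<Longrightarrow> x \<le> x' \<Longrightarrow> \<forall>i\<in>{3..m}. 0 \<le> Fcomp b m x n (\<lambda>_. 0) i \<and> Fcomp b m x n (\<lambda>_. 0) i \<le> Fcomp b m x' n (\<lambda>_. 0) i"
proof (induction n arbitrary: x x')
  case (Suc n)
  have x1: "0 \<le> Mb_inv b x" "Mb_inv b x \<le> Mb_inv b x'" using Suc.prems by (auto intro: Mbinv_nonneg Mbinv_mono)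
  note IH = Suc.IH[OF x1]
  have z: "\<forall>l\<in>{2..m}. 0 \<le> ((Fcomp b m (Mb_inv b x) n (\<lambda>_. 0))(2 := Mb_inv b x)) l \<and>
     ((Fcomp b m (Mb_inv b x) n (\<lambda>_. 0))(2 := Mb_inv b x)) l \<le> ((Fcomp b m (Mb_inv b x') n (\<lambda>_. 0))(2 := Mb_inv b x')) l"
  proof
    fix l assume l: "l \<in> {2..m}"
    show "0 \<le> ((Fcomp b m (Mb_inv b x) n (\<lambda>_. 0))(2 := Mb_inv b x)) l \<and>
     ((Fcomp b m (Mb_inv b x) n (\<lambda>_. 0))(2 := Mb_inv b x)) l \<le> ((Fcomp b m (Mb_inv b x') n (\<lambda>_. 0))(2 := Mb_inv b x')) l"
    proof (cases "l = 2")
      case False then have "l \<in> {3..m}" using l by auto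
      then show ?thesis using IH False by simp
    qed (use x1 in simp)
  qed
  show ?case
  proof
    fix i assume i: "i \<in> {3..m}"
    have "0 \<le> P b i ((Fcomp b m (Mb_inv b x) n (\<lambda>_. 0))(2 := Mb_inv b x))"
      using i z by (intro P_nonneg) auto
    moreover have "P b i ((Fcomp b m (Mb_inv b x) n (\<lambda>_. 0))(2 := Mb_inv b x)) \<le> P b i ((Fcomp b m (Mb_inv b x') n (\<lambda>_. 0))(2 := Mb_inv b x'))"
      using i z by (intro P_mono) auto
    ultimately show "0 \<le> Fcomp b m x (Suc n) (\<lambda>_. 0) i \<and> Fcomp b m x (Suc n) (\<lambda>_. 0) i \<le> Fcomp b m x' (Suc n) (\<lambda>_. 0) i"
      using i by (simp add: Fcomp_Suc Pvec_eq)
  qed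
qed simp

lemma H_nonneg: "0 \<le> x \<Longrightarrow> i \<in> {3..m} \<Longrightarrow> 0 \<le> H x i"
  using Fcomp_mono[of x x] H_lim[of x i] by (intro LIMSEQ_le_const[of "\<lambda>n. Fcomp b m x n (\<lambda>_. 0) i"]) auto

lemma H_mono: "0 \<le> x \<Longrightarrow> x \<le> x' \<Longrightarrow> i \<in> {3..m} \<Longrightarrow> H x i \<le> H x' i"
  using Fcomp_mono[of x x'] H_lim[of x i] H_lim[of x' i] by (intro LIMSEQ_le) auto

lemma Mbinv_0[simp]: "Mb_inv b 0 = 0" by (simp add: Mb_inv_def)

lemma Fcomp_zero: "Fcomp b m 0 n (\<lambda>_. 0) = (\<lambda>_. 0)"
proof (induction n)
  case (Suc n)
  have "Pvec b m 0 (\<lambda>_. 0) = (\<lambda>_. 0)"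
    by (auto simp: Pvec_def fun_eq_iff P_zero fun_upd_idem_iff cong: fun_upd_def)
  then show ?case using Suc by (simp add: Fcomp_Suc)
qed simp

lemma H_zero: "H 0 i = 0"
  unfolding H_def Fcomp_zero by simp

end

context L3 begin

lemma growth:
  fixes g hh :: "real \<Rightarrow> real" and c :: real
  assumes c: "0 < c" and hh: "filterlim hh at_top at_top"
    and low: "\<And>x. 0 \<le> x \<Longrightarrow> c * x * hh x \<le> g (Mb b x)"
  shows "filterlim g at_top at_top"
  unfolding filterlim_at_top
proof
  fix Z :: real
  have "eventually (\<lambda>x. (\<bar>Z\<bar> + 1) / c \<le> hh x) at_top" using hh unfolding filterlim_at_top by blast
  then obtain X where X: "\<forall>x\<ge>X. (\<bar>Z\<bar> + 1) / c \<le> hh x" unfolding eventually_at_top_linorder by blast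
  define X1 where "X1 = max X 1"
  have "Z \<le> g y" if y: "y \<ge> Mb b X1" for y
  proof -
    have X10: "0 \<le> X1" unfolding X1_def by simp
    have y0: "0 \<le> y" using y Mb_nonneg[OF X10] by linarith
    define x where "x = Mb_inv b y"
    have "X1 \<le> x" unfolding x_def using Mbinv_mono[OF Mb_nonneg[OF X10] y] Mbinv_Mb[OF X10] by simp
    then have x: "X \<le> x" "1 \<le> x" unfolding X1_def by auto
    have hx: "(\<bar>Z\<bar> + 1) / c \<le> hh x" using X x by blast
    have hx0: "0 \<le> hh x" using hx c by (smt (verit) divide_pos_pos)
    have "Z \<le> c * ((\<bar>Z\<bar> + 1) / c)" using c by simp
    also have "\<dots> \<le> c * hh x" using hx c by (intro mult_left_mono) auto
    also have "\<dots> \<le> c * x * hh x" using x hx0 c by (simp add: mult.assoc mult_left_mono mult_le_cancel_left2 mult_le_cancel_right1 mult_right_mono)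
    also have "\<dots> \<le> g (Mb b x)" using low x by simp
    also have "Mb b x = y" unfolding x_def using Mb_Mbinv[OF y0] .
    finally show ?thesis .
  qed
  then show "eventually (\<lambda>y. Z \<le> g y) at_top" unfolding eventually_at_top_linorder by blast
qed

lemma H_top: "l \<in> {2..m} \<Longrightarrow> filterlim (\<lambda>x. if l = 2 then x else H x l) at_top at_top"
proof (induction l rule: less_induct)
  case (less l)
  show ?case
  proof (cases "l = 2")
    case True then show ?thesis by (simp add: filterlim_ident)
  next
    case False
    then have l3: "l \<in> {3..m}" using less.prems by auto
    have z: "\<forall>j\<in>{2..m}. 0 \<le> ((H x)(2 := x)) j" if x: "0 \<le> x" for x
      using x H_nonneg by auto
    show ?thesis
    proof (cases "l = 3")
      case True
      have "filterlim (\<lambda>x. H x 3) at_top at_top"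
      proof (rule growth[of "1 / real b ^ 3" "\<lambda>x. x"])
        show "0 < 1 / real b ^ 3" using bpos by simp
        show "filterlim (\<lambda>x. x) at_top at_top" by (rule filterlim_ident)
        fix x :: real assume x: "0 \<le> x"
        have "x * x / real b ^ 3 \<le> P b 3 ((H x)(2 := x))"
          using P3_lower[OF z[OF x]] by (simp only: fun_upd_same)
        also have "\<dots> = H (Mb b x) 3" using H_rec[OF x, of 3] m3 by (simp add: Pvec_eq)
        finally show "1 / real b ^ 3 * x * x \<le> H (Mb b x) 3" by simp
      qed
      then show ?thesis using True by simp
    next
      case l4: False
      then have l4: "4 \<le> l" "l \<le> m" using l3 by auto
      have IH: "filterlim (\<lambda>x. if l - 2 = 2 then x else H x (l - 2)) at_top at_top"
      proof -
        have "l - 2 < l" "l - 2 \<in> {2..m}" using l4 by auto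
        from less.IH[OF this] show ?thesis .
      qed
      have "filterlim (\<lambda>x. H x l) at_top at_top"
      proof (rule growth[OF _ IH, of "1 / real b ^ l"])
        show "0 < 1 / real b ^ l" using bpos by simp
        fix x :: real assume x: "0 \<le> x"
        have "x * ((H x)(2 := x)) (l - 2) / real b ^ l \<le> P b l ((H x)(2 := x))"
          using P_lower[OF l4 z[OF x]] by (simp only: fun_upd_same)
        also have "\<dots> = H (Mb b x) l" using H_rec[OF x l3] l3 by (simp add: Pvec_eq)
        also have "((H x)(2 := x)) (l - 2) = (if l - 2 = 2 then x else H x (l - 2))" by simp
        finally show "1 / real b ^ l * x * (if l - 2 = 2 then x else H x (l - 2)) \<le> H (Mb b x) l" by simp
      qed
      then show ?thesis using False by simp
    qed
  qed
qed

lemma H_m_top: "filterlim (\<lambda>x. H x m) at_top at_top"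
  using H_top[of m] m3 by simp

end

context L3 begin

definition ST :: "real \<Rightarrow> (nat \<Rightarrow> nat \<Rightarrow> real) \<Rightarrow> nat \<Rightarrow> nat \<Rightarrow> real" where
  "ST x W k = (\<lambda>i. foldr (\<lambda>j w. matvec m (DP b m (T j x) (W j)) w) [1..<k] (d1P b m (T k x) (W k)) i * deriv (T k) x)"

lemma series_term_ST: "series_term b m G k x = ST x (\<lambda>j. G (T j x)) k"
  unfolding series_term_def ST_def ..

definition Dn :: "real \<Rightarrow> nat \<Rightarrow> (nat \<Rightarrow> real) \<Rightarrow> nat \<Rightarrow> real" where
  "Dn x n y = (\<lambda>i. \<Sum>k=1..n. ST x (\<lambda>j. Fcomp b m (T j x) (n - j) y) k i)"

lemma matvec_scale: "matvec m A (\<lambda>i. v i * c) i = matvec m A v i * c"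
  unfolding matvec_def by (simp add: sum_distrib_right mult.assoc)

lemma matvec_sum: "finite K \<Longrightarrow> matvec m A (\<lambda>i. \<Sum>k\<in>K. v k i) i = (\<Sum>k\<in>K. matvec m A (v k) i)"
  unfolding matvec_def by (simp add: sum_distrib_left sum.swap[of _ K])

lemma ST_1: "0 \<le> x \<Longrightarrow> ST x W 1 i = d1P b m (Mb_inv b x) (W 1) i * Mbd x"
  unfolding ST_def by (simp add: deriv_T Td_def)

lemma ST_Suc:
  assumes x: "0 \<le> x" and k: "1 \<le> k"
  shows "ST x W (Suc k) i = matvec m (DP b m (Mb_inv b x) (W 1)) (ST (Mb_inv b x) (\<lambda>j. W (Suc j)) k) i * Mbd x"
proof -
  define x1 where "x1 = Mb_inv b x"
  have x1: "0 \<le> x1" unfolding x1_def using x by (rule Mbinv_nonneg)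
  define f where "f = (\<lambda>j w. matvec m (DP b m (T j x) (W j)) w)"
  define f' where "f' = (\<lambda>j w. matvec m (DP b m (T j x1) (W (Suc j))) w)"
  have ff: "f \<circ> Suc = f'" unfolding f_def f'_def x1_def by (simp add: fun_eq_iff T_Suc)
  have ul: "[1..<Suc k] = 1 # map Suc [1..<k]" using k by (simp add: upt_conv_Cons map_Suc_upt)
  have A: "foldr f [1..<Suc k] v = f 1 (foldr f' [1..<k] v)" for v
    unfolding ul by (simp add: foldr_map ff)
  have d1eq: "d1P b m (T (Suc k) x) (W (Suc k)) = d1P b m (T k x1) (W (Suc k))" unfolding x1_def by (simp add: T_Suc)
  have deq: "deriv (T (Suc k)) x = deriv (T k) x1 * Mbd x"
    using x x1 unfolding x1_def by (simp add: deriv_T Td_Suc)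
  have "ST x W (Suc k) i = foldr f [1..<Suc k] (d1P b m (T (Suc k) x) (W (Suc k))) i * deriv (T (Suc k)) x"
    by (simp only: ST_def f_def)
  also have "\<dots> = f 1 (foldr f' [1..<k] (d1P b m (T k x1) (W (Suc k)))) i * (deriv (T k) x1 * Mbd x)"
    by (simp only: A d1eq deq)
  also have "\<dots> = matvec m (DP b m x1 (W 1)) (\<lambda>i. foldr f' [1..<k] (d1P b m (T k x1) (W (Suc k))) i * deriv (T k) x1) i * Mbd x"
    unfolding f_def by (simp add: matvec_scale x1_def mult.assoc)
  also have "\<dots> = matvec m (DP b m (Mb_inv b x) (W 1)) (ST (Mb_inv b x) (\<lambda>j. W (Suc j)) k) i * Mbd x"
    unfolding ST_def f'_def x1_def ..
  finally show ?thesis .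
qed

lemma Dn_0: "Dn x 0 y i = 0" unfolding Dn_def by simp

lemma Dn_Suc:
  assumes x: "0 \<le> x"
  shows "Dn x (Suc n) y i = (d1P b m (Mb_inv b x) (Fcomp b m (Mb_inv b x) n y) i +
     matvec m (DP b m (Mb_inv b x) (Fcomp b m (Mb_inv b x) n y)) (Dn (Mb_inv b x) n y) i) * Mbd x"
proof -
  define x1 where "x1 = Mb_inv b x"
  define W where "W j = Fcomp b m (T j x) (Suc n - j) y" for j
  define W' where "W' j = Fcomp b m (T j x1) (n - j) y" for j
  have WW: "(\<lambda>j. W (Suc j)) = W'" unfolding W_def W'_def x1_def by (simp add: fun_eq_iff T_Suc)
  have W1: "W 1 = Fcomp b m x1 n y" unfolding W_def x1_def by simp
  have "Dn x (Suc n) y i = (\<Sum>k=1..Suc n. ST x W k i)" unfolding Dn_def W_def ..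
  also have "\<dots> = ST x W 1 i + (\<Sum>k=Suc 1..Suc n. ST x W k i)"
    by (rule sum.atLeast_Suc_atMost) simp
  also have "(\<Sum>k=Suc 1..Suc n. ST x W k i) = (\<Sum>k=1..n. ST x W (Suc k) i)"
    by (rule sum.shift_bounds_cl_Suc_ivl)
  also have "(\<Sum>k=1..n. ST x W (Suc k) i) = (\<Sum>k=1..n. matvec m (DP b m x1 (W 1)) (ST x1 W' k) i * Mbd x)"
    using x by (intro sum.cong refl) (auto simp: ST_Suc WW x1_def)
  also have "\<dots> = matvec m (DP b m x1 (W 1)) (\<lambda>i. \<Sum>k=1..n. ST x1 W' k i) i * Mbd x"
    by (simp add: matvec_sum sum_distrib_right)
  also have "(\<lambda>i. \<Sum>k=1..n. ST x1 W' k i) = Dn x1 n y" unfolding Dn_def W'_def ..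
  finally show ?thesis using x ST_1[of x W i] W1 by (simp add: x1_def algebra_simps)
qed

lemma Fcomp_deriv:
  "0 \<le> x \<Longrightarrow> i \<in> {3..m} \<Longrightarrow> ((\<lambda>t. Fcomp b m t n y i) has_real_derivative Dn x n y i) (at x)"
proof (induction n arbitrary: x i)
  case 0 then show ?case by (simp add: Dn_0)
next
  case (Suc n)
  define x1 where "x1 = Mb_inv b x"
  have x1: "0 \<le> x1" unfolding x1_def using Suc.prems(1) by (rule Mbinv_nonneg)
  define Z where "Z t = (Fcomp b m (Mb_inv b t) n y)(2 := Mb_inv b t)" for t
  define Z' where "Z' l = (if l = 2 then Mbd x else Dn x1 n y l * Mbd x)" for l
  have im: "i \<le> m" using Suc.prems by simp
  have eqf: "(\<lambda>t. Fcomp b m t (Suc n) y i) = (\<lambda>t. P b i (Z t))"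
    unfolding Z_def using Suc.prems by (simp add: fun_eq_iff Fcomp_Suc Pvec_eq)
  have "((\<lambda>t. P b i (Z t)) has_real_derivative (\<Sum>l\<in>{2..m}. PD i l (Z x) * Z' l)) (at x)"
  proof (rule PD(2)[OF im])
    fix l assume l: "l \<in> {2..m}"
    show "((\<lambda>t. Z t l) has_real_derivative Z' l) (at x)"
    proof (cases "l = 2")
      case True then show ?thesis unfolding Z_def Z'_def using Mbinv_deriv[OF Suc.prems(1)] by simp
    next
      case False
      then have l3: "l \<in> {3..m}" using l by auto
      have "((\<lambda>t. Fcomp b m (Mb_inv b t) n y l) has_real_derivative Dn x1 n y l * Mbd x) (at x)"
        unfolding x1_def by (rule DERIV_chain2[OF Suc.IH[OF _ l3] Mbinv_deriv[OF Suc.prems(1)]])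
           (rule x1[unfolded x1_def])
      then show ?thesis unfolding Z_def Z'_def using False by simp
    qed
  qed
  also have "(\<Sum>l\<in>{2..m}. PD i l (Z x) * Z' l) = Dn x (Suc n) y i"
  proof -
    have "(\<Sum>l\<in>{2..m}. PD i l (Z x) * Z' l) = PD i 2 (Z x) * Mbd x + (\<Sum>j\<in>{3..m}. PD i j (Z x) * (Dn x1 n y j * Mbd x))"
      unfolding V_split Z'_def by (simp add: sum.insert cong: if_cong)
    also have "\<dots> = (d1P b m x1 (Fcomp b m x1 n y) i + matvec m (DP b m x1 (Fcomp b m x1 n y)) (Dn x1 n y) i) * Mbd x"
      using Suc.prems unfolding Z_def x1_def matvec_def
      by (simp add: d1P_eq DP_eq algebra_simps sum_distrib_left sum_distrib_right)
    also have "\<dots> = Dn x (Suc n) y i" unfolding x1_def by (rule Dn_Suc[OF Suc.prems(1), symmetric])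
    finally show ?thesis .
  qed
  finally show ?case unfolding eqf .
qed

lemma Fcomp_deriv_eq: "0 \<le> x \<Longrightarrow> i \<in> {3..m} \<Longrightarrow> deriv (\<lambda>t. Fcomp b m t n y i) x = Dn x n y i"
  by (rule DERIV_imp_deriv[OF Fcomp_deriv])

end

lemma geo_sum_le: "(\<Sum>k\<in>{a..<n}. (3/4::real) ^ (k + 1)) \<le> 4 * (3/4) ^ (a + 1)"
proof -
  have eq: "(\<Sum>k\<in>{a..<a + d}. (3/4::real) ^ (k + 1)) = 4 * (3/4) ^ (a + 1) - 4 * (3/4) ^ (a + d + 1)" for d
    by (induction d) (auto simp: algebra_simps)
  show ?thesis
  proof (cases "a \<le> n")
    case True
    then have "{a..<n} = {a..<a + (n - a)}" by simp
    then show ?thesis using eq[of "n - a"] by simp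
  qed simp
qed

lemma geo_suminf: "summable (\<lambda>k. B * (3/4::real) ^ (k + c))" "(\<Sum>k. B * (3/4::real) ^ (k + c)) = 4 * B * (3/4) ^ c"
proof -
  have s: "summable (\<lambda>k. (3/4::real) ^ k)" by (rule summable_geometric) simp
  have e: "(\<lambda>k. B * (3/4::real) ^ (k + c)) = (\<lambda>k. (B * (3/4) ^ c) * (3/4) ^ k)" by (simp add: power_add fun_eq_iff)
  show "summable (\<lambda>k. B * (3/4::real) ^ (k + c))" unfolding e by (intro summable_mult s)
  have "(\<Sum>k. (B * (3/4::real) ^ c) * (3/4) ^ k) = (B * (3/4) ^ c) * (\<Sum>k. (3/4::real) ^ k)"
    by (rule suminf_mult[OF s])
  also have "(\<Sum>k. (3/4::real) ^ k) = 4" using suminf_geometric[of "3/4::real"] by simp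
  finally show "(\<Sum>k. B * (3/4::real) ^ (k + c)) = 4 * B * (3/4) ^ c" unfolding e by simp
qed

lemma sum_shift1: "(\<Sum>k=1..n. f k) = (\<Sum>k<n. f (Suc k))"
  by (induction n) (auto simp: atLeastAtMostSuc_conv add.commute)

lemma prod_c:
  fixes L q :: real
  assumes q: "0 < q" and Lq: "q \<le> L" and c: "\<And>j. 0 \<le> c j \<and> c j \<le> L" "\<And>j. j \<ge> N1 \<Longrightarrow> c j \<le> q"
  shows "(\<Prod>j\<in>{1..<k}. c j) \<le> (L / q) ^ N1 * q ^ (k - 1)"
proof -
  have L1: "1 \<le> L / q" using q Lq by simp
  have main: "(\<Prod>j\<in>{1..<k}. c j) \<le> (L / q) ^ (min k N1) * q ^ (k - 1)" for k
  proof (induction k)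
    case 0 then show ?case by simp
  next
    case (Suc k)
    show ?case
    proof (cases "k = 0")
      case True then show ?thesis using L1 by (simp add: one_le_power)
    next
      case False
      have qk: "q ^ (k - 1) * q = q ^ k" using False by (cases k) auto
      have "(\<Prod>j\<in>{1..<Suc k}. c j) = (\<Prod>j\<in>{1..<k}. c j) * c k"
        using False by (simp add: prod.atLeastLessThan_Suc)
      also have "\<dots> \<le> (L / q) ^ (min k N1) * q ^ (k - 1) * c k"
        using Suc.IH c(1)[of k] by (intro mult_right_mono) auto
      also have "\<dots> \<le> (L / q) ^ (min (Suc k) N1) * q ^ (Suc k - 1)"
      proof (cases "k < N1")
        case True
        have "(L / q) ^ (min k N1) * q ^ (k - 1) * c k \<le> (L / q) ^ (min k N1) * q ^ (k - 1) * L"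
          using c(1)[of k] L1 q by (intro mult_left_mono) auto
        also have "\<dots> = (L / q) ^ (min k N1) * (L / q) * (q ^ (k - 1) * q)" using q by (simp add: field_simps)
        also have "\<dots> = (L / q) ^ (min (Suc k) N1) * q ^ (Suc k - 1)"
        proof -
          have m1: "min k N1 = k" "min (Suc k) N1 = Suc k" using True by auto
          show ?thesis by (simp only: m1 qk power_Suc2 diff_Suc_1)
        qed
        finally show ?thesis .
      next
        case nt: False
        have "(L / q) ^ (min k N1) * q ^ (k - 1) * c k \<le> (L / q) ^ (min k N1) * q ^ (k - 1) * q"
          using c(2)[of k] nt q L1 by (intro mult_left_mono) auto
        also have "\<dots> = (L / q) ^ (min (Suc k) N1) * q ^ (Suc k - 1)"
        proof -
          have m2: "min (Suc k) N1 = min k N1" using nt by auto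
          show ?thesis by (simp only: m2 qk diff_Suc_1 mult.assoc)
        qed
        finally show ?thesis .
      qed
      finally show ?thesis .
    qed
  qed
  have "(L / q) ^ (min k N1) \<le> (L / q) ^ N1" using L1 by (intro power_increasing) auto
  then have "(L / q) ^ (min k N1) * q ^ (k - 1) \<le> (L / q) ^ N1 * q ^ (k - 1)"
    using q by (intro mult_right_mono) auto
  then show ?thesis using main[of k] by linarith
qed

context L3 begin

definition rowb :: "(nat \<Rightarrow> nat \<Rightarrow> real) \<Rightarrow> real \<Rightarrow> bool" where
  "rowb A c \<longleftrightarrow> (\<forall>i\<in>{3..m}. (\<Sum>j\<in>{3..m}. \<bar>A i j\<bar>) \<le> c)"

lemma matvec_bx:
  assumes A: "rowb A c" and v: "bx B v" and B: "0 \<le> B"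
  shows "bx (c * B) (matvec m A v)"
  unfolding bx_def
proof
  fix i assume i: "i \<in> {3..m}"
  have "\<bar>matvec m A v i\<bar> \<le> (\<Sum>j\<in>{3..m}. \<bar>A i j\<bar> * \<bar>v j\<bar>)"
    unfolding matvec_def by (rule order_trans[OF sum_abs]) (simp add: abs_mult)
  also have "\<dots> \<le> (\<Sum>j\<in>{3..m}. \<bar>A i j\<bar> * B)"
    using v unfolding bx_def by (intro sum_mono mult_left_mono) auto
  also have "\<dots> = (\<Sum>j\<in>{3..m}. \<bar>A i j\<bar>) * B" by (simp add: sum_distrib_right)
  also have "\<dots> \<le> c * B" using A i B unfolding rowb_def by (intro mult_right_mono) auto
  finally show "\<bar>matvec m A v i\<bar> \<le> c * B" .
qed

lemma matvec_diff:
  assumes A': "rowb A' c" and AA: "rowb (\<lambda>i j. A i j - A' i j) e" and v: "bx B v" and B: "0 \<le> B"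
    and d: "near d v v'"
  shows "near (e * B + c * d) (matvec m A v) (matvec m A' v')"
  unfolding near_def
proof
  fix i assume i: "i \<in> {3..m}"
  have "matvec m A v i - matvec m A' v' i = matvec m (\<lambda>i j. A i j - A' i j) v i + matvec m A' (\<lambda>j. v j - v' j) i"
    unfolding matvec_def by (simp add: sum_subtractf[symmetric] sum.distrib[symmetric] algebra_simps)
  also have "\<bar>\<dots>\<bar> \<le> \<bar>matvec m (\<lambda>i j. A i j - A' i j) v i\<bar> + \<bar>matvec m A' (\<lambda>j. v j - v' j) i\<bar>" by (rule abs_triangle_ineq)
  also have "\<dots> \<le> e * B + c * d"
  proof (rule add_mono)
    show "\<bar>matvec m (\<lambda>i j. A i j - A' i j) v i\<bar> \<le> e * B"
      using matvec_bx[OF AA v B] i unfolding bx_def by blast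
    have bd: "bx d (\<lambda>j. v j - v' j)" using d unfolding near_def bx_def by simp
    from matvec_bx[OF A' bd near_nonneg[OF d]] i
    show "\<bar>matvec m A' (\<lambda>j. v j - v' j) i\<bar> \<le> c * d" unfolding bx_def by blast
  qed
  finally show "\<bar>matvec m A v i - matvec m A' v' i\<bar> \<le> e * B + c * d" .
qed

lemma foldr_bx:
  assumes "\<And>j. j \<in> {1..<k} \<Longrightarrow> rowb (A j) (c j) \<and> 0 \<le> c j"
  shows "bx B v \<Longrightarrow> 0 \<le> B \<Longrightarrow> bx (B * (\<Prod>j\<in>{1..<k}. c j)) (foldr (\<lambda>j w. matvec m (A j) w) [1..<k] v)"
  using assms
proof (induction k arbitrary: v B)
  case 0 then show ?case by simp
next
  case (Suc k)
  show ?case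
  proof (cases "k = 0")
    case True then show ?thesis using Suc.prems by simp
  next
    case False
    have ck: "rowb (A k) (c k)" "0 \<le> c k" using Suc.prems(3)[of k] False by auto
    have "bx (c k * B) (matvec m (A k) v)" using matvec_bx[OF ck(1) Suc.prems(1,2)] .
    then have "bx (c k * B * (\<Prod>j\<in>{1..<k}. c j)) (foldr (\<lambda>j w. matvec m (A j) w) [1..<k] (matvec m (A k) v))"
      using Suc.IH[of "c k * B" "matvec m (A k) v"] Suc.prems ck by auto
    moreover have "[1..<Suc k] = [1..<k] @ [k]" using False by simp
    moreover have "(\<Prod>j\<in>{1..<Suc k}. c j) = (\<Prod>j\<in>{1..<k}. c j) * c k" using False by (simp add: prod.atLeastLessThan_Suc)
    ultimately show ?thesis by (simp add: algebra_simps)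
  qed
qed

lemma foldr_diff:
  assumes Lb: "1 \<le> Lb" and e: "0 \<le> e"
    and A: "\<And>j. j \<in> {1..<k} \<Longrightarrow> rowb (A j) Lb \<and> rowb (A' j) Lb \<and> rowb (\<lambda>i l. A j i l - A' j i l) e"
  shows "bx B v \<Longrightarrow> 0 \<le> B \<Longrightarrow> near d v v' \<Longrightarrow>
    near (Lb ^ k * (d + real k * e * B)) (foldr (\<lambda>j w. matvec m (A j) w) [1..<k] v) (foldr (\<lambda>j w. matvec m (A' j) w) [1..<k] v')"
  using A
proof (induction k arbitrary: v v' d B)
  case 0
  then show ?case using near_nonneg[OF 0(3)] by (auto intro: near_mono)
next
  case (Suc k)
  have d0: "0 \<le> d" using near_nonneg[OF Suc.prems(3)] .
  show ?case
  proof (cases "k = 0")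
    case True
    have "d \<le> Lb * (d + e * B)" using Lb d0 e Suc.prems(2)
      by (smt (verit, best) mult_le_cancel_right1 mult_nonneg_nonneg)
    then show ?thesis using True Suc.prems by (auto intro: near_mono)
  next
    case False
    have Ak: "rowb (A k) Lb" "rowb (A' k) Lb" "rowb (\<lambda>i l. A k i l - A' k i l) e" using Suc.prems(4)[of k] False by auto
    have n1: "near (e * B + Lb * d) (matvec m (A k) v) (matvec m (A' k) v')"
      by (rule matvec_diff[OF Ak(2) Ak(3) Suc.prems(1,2,3)])
    have b1: "bx (Lb * B) (matvec m (A k) v)" by (rule matvec_bx[OF Ak(1) Suc.prems(1,2)])
    have LB: "0 \<le> Lb * B" using Lb Suc.prems(2) by simp
    have IH: "near (Lb ^ k * ((e * B + Lb * d) + real k * e * (Lb * B)))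
       (foldr (\<lambda>j w. matvec m (A j) w) [1..<k] (matvec m (A k) v)) (foldr (\<lambda>j w. matvec m (A' j) w) [1..<k] (matvec m (A' k) v'))"
      using Suc.IH[OF b1 LB n1] Suc.prems(4) by auto
    have ul: "[1..<Suc k] = [1..<k] @ [k]" using False by simp
    have "Lb ^ k * ((e * B + Lb * d) + real k * e * (Lb * B)) \<le> Lb ^ Suc k * (d + real (Suc k) * e * B)"
    proof -
      have "e * B \<le> Lb * (e * B)" using mult_right_mono[OF Lb mult_nonneg_nonneg[OF e Suc.prems(2)]] by simp
      then have "(e * B + Lb * d) + real k * e * (Lb * B) \<le> Lb * (d + real (Suc k) * e * B)"
        by (simp add: algebra_simps)
      then show ?thesis using Lb by (simp add: mult_left_mono)
    qed
    then show ?thesis using IH unfolding ul by (simp add: near_mono)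
  qed
qed

end

context L3 begin

lemma PD_lip:
  assumes R: "0 \<le> R" and K: "0 \<le> K"
  shows "\<exists>L\<ge>0. \<forall>p\<in>{3..m}\<times>{2..m}. \<forall>s\<in>{0..R}. \<forall>w w' d. bx K w \<longrightarrow> bx K w' \<longrightarrow> near d w w' \<longrightarrow>
     \<bar>PD (fst p) (snd p) (w(2 := s))\<bar> \<le> L \<and> \<bar>PD (fst p) (snd p) (w(2 := s)) - PD (fst p) (snd p) (w'(2 := s))\<bar> \<le> L * d"
proof (rule finite_unif)
  fix p :: "nat \<times> nat" assume p: "p \<in> {3..m}\<times>{2..m}"
  have im: "fst p \<le> m" using p by auto
  obtain C L where CL: "C \<ge> 0" "L \<ge> 0" and CL3: "\<forall>z z' d. (\<forall>l\<in>{2..m}. \<bar>z l\<bar> \<le> max R K) \<longrightarrow> (\<forall>l\<in>{2..m}. \<bar>z' l\<bar> \<le> max R K)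
     \<longrightarrow> (\<forall>l\<in>{2..m}. \<bar>z l - z' l\<bar> \<le> d) \<longrightarrow> \<bar>PD (fst p) (snd p) z\<bar> \<le> C \<and> \<bar>PD (fst p) (snd p) z - PD (fst p) (snd p) z'\<bar> \<le> L * d"
    using pf_lip[OF PD(1)[where i="fst p" and l="snd p", OF im], where K="max R K"] by blast
  have "\<bar>PD (fst p) (snd p) (w(2 := s))\<bar> \<le> max C L \<and> \<bar>PD (fst p) (snd p) (w(2 := s)) - PD (fst p) (snd p) (w'(2 := s))\<bar> \<le> max C L * d"
    if s: "s \<in> {0..R}" and w: "bx K w" "bx K w'" and d: "near d w w'" for s w w' d
  proof -
    have w1: "bx (max R K) w" "bx (max R K) w'" using w by (auto intro: bx_mono)
    have s1: "\<bar>s\<bar> \<le> max R K" using s by auto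
    have "\<bar>PD (fst p) (snd p) (w(2 := s))\<bar> \<le> C \<and> \<bar>PD (fst p) (snd p) (w(2 := s)) - PD (fst p) (snd p) (w'(2 := s))\<bar> \<le> L * d"
      using CL3 box_upd[OF w1(1) s1] box_upd[OF w1(2) s1] near_upd[OF d] by blast
    moreover have "L * d \<le> max C L * d" using near_nonneg[OF d] by (intro mult_right_mono) auto
    ultimately show ?thesis by auto
  qed
  then show "\<exists>L\<ge>0. \<forall>s\<in>{0..R}. \<forall>w w' d. bx K w \<longrightarrow> bx K w' \<longrightarrow> near d w w' \<longrightarrow>
     \<bar>PD (fst p) (snd p) (w(2 := s))\<bar> \<le> L \<and> \<bar>PD (fst p) (snd p) (w(2 := s)) - PD (fst p) (snd p) (w'(2 := s))\<bar> \<le> L * d"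
    using CL by (intro exI[of _ "max C L"]) auto
next
  fix p L L' assume h: "\<forall>s\<in>{0..R}. \<forall>w w' d. bx K w \<longrightarrow> bx K w' \<longrightarrow> near d w w' \<longrightarrow>
     \<bar>PD (fst p) (snd p) (w(2 := s))\<bar> \<le> L \<and> \<bar>PD (fst p) (snd p) (w(2 := s)) - PD (fst p) (snd p) (w'(2 := s))\<bar> \<le> L * d" "L \<le> L'"
  show "\<forall>s\<in>{0..R}. \<forall>w w' d. bx K w \<longrightarrow> bx K w' \<longrightarrow> near d w w' \<longrightarrow>
     \<bar>PD (fst p) (snd p) (w(2 := s))\<bar> \<le> L' \<and> \<bar>PD (fst p) (snd p) (w(2 := s)) - PD (fst p) (snd p) (w'(2 := s))\<bar> \<le> L' * d"
  proof (intro ballI allI impI)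
    fix s w w' d assume a: "s \<in> {0..R}" "bx K w" "bx K w'" "near d w w'"
    have "L * d \<le> L' * d" using near_nonneg[OF a(4)] h(2) by (intro mult_right_mono)
    then show "\<bar>PD (fst p) (snd p) (w(2 := s))\<bar> \<le> L' \<and> \<bar>PD (fst p) (snd p) (w(2 := s)) - PD (fst p) (snd p) (w'(2 := s))\<bar> \<le> L' * d"
      using h a by fastforce
  qed
qed simp

abbreviation nI where "nI \<equiv> real (card {3..m})"

lemma DP_consts:
  assumes R: "0 \<le> R" and K: "0 \<le> K"
  shows "\<exists>L\<ge>0. \<forall>s\<in>{0..R}. \<forall>w w' d. bx K w \<longrightarrow> bx K w' \<longrightarrow> near d w w' \<longrightarrow>
     rowb (DP b m s w) L \<and> rowb (\<lambda>i j. DP b m s w i j - DP b m s w' i j) (L * d) \<and>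
     bx L (d1P b m s w) \<and> near (L * d) (d1P b m s w) (d1P b m s w')"
proof -
  obtain L where L: "L \<ge> 0" "\<forall>p\<in>{3..m}\<times>{2..m}. \<forall>s\<in>{0..R}. \<forall>w w' d. bx K w \<longrightarrow> bx K w' \<longrightarrow> near d w w' \<longrightarrow>
     \<bar>PD (fst p) (snd p) (w(2 := s))\<bar> \<le> L \<and> \<bar>PD (fst p) (snd p) (w(2 := s)) - PD (fst p) (snd p) (w'(2 := s))\<bar> \<le> L * d"
    using PD_lip[OF R K] by blast
  have L2: "\<bar>PD i j (w(2 := s))\<bar> \<le> L \<and> \<bar>PD i j (w(2 := s)) - PD i j (w'(2 := s))\<bar> \<le> L * d"
    if "i \<in> {3..m}" "j \<in> {2..m}" "s \<in> {0..R}" "bx K w" "bx K w'" "near d w w'" for i j s w w' d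
    using L(2) that by (metis SigmaI fst_conv snd_conv)
  have nI0: "0 \<le> nI" by simp
  have "rowb (DP b m s w) (nI * L + L) \<and> rowb (\<lambda>i j. DP b m s w i j - DP b m s w' i j) ((nI * L + L) * d) \<and>
     bx (nI * L + L) (d1P b m s w) \<and> near ((nI * L + L) * d) (d1P b m s w) (d1P b m s w')"
    if s: "s \<in> {0..R}" and w: "bx K w" "bx K w'" and d: "near d w w'" for s w w' d
  proof (intro conjI)
    have d0: "0 \<le> d" using near_nonneg[OF d] .
    have ww: "bx K w" "bx K w" "near 0 w w" using w unfolding near_def by auto
    show "rowb (DP b m s w) (nI * L + L)" unfolding rowb_def
    proof
      fix i assume i: "i \<in> {3..m}"
      have "(\<Sum>j\<in>{3..m}. \<bar>DP b m s w i j\<bar>) \<le> (\<Sum>j\<in>{3..m}. L)"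
        using i L2[OF i _ s ww] by (intro sum_mono) (auto simp: DP_eq)
      then show "(\<Sum>j\<in>{3..m}. \<bar>DP b m s w i j\<bar>) \<le> nI * L + L" using L(1) by simp
    qed
    show "rowb (\<lambda>i j. DP b m s w i j - DP b m s w' i j) ((nI * L + L) * d)" unfolding rowb_def
    proof
      fix i assume i: "i \<in> {3..m}"
      have "(\<Sum>j\<in>{3..m}. \<bar>DP b m s w i j - DP b m s w' i j\<bar>) \<le> (\<Sum>j\<in>{3..m}. L * d)"
        using i L2[OF i _ s w d] by (intro sum_mono) (auto simp: DP_eq)
      also have "\<dots> = nI * L * d" by simp
      also have "\<dots> \<le> (nI * L + L) * d" using L(1) d0 by (intro mult_right_mono) auto
      finally show "(\<Sum>j\<in>{3..m}. \<bar>DP b m s w i j - DP b m s w' i j\<bar>) \<le> (nI * L + L) * d" .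
    qed
    show "bx (nI * L + L) (d1P b m s w)" unfolding bx_def
    proof
      fix i assume i: "i \<in> {3..m}"
      have "\<bar>d1P b m s w i\<bar> \<le> L" using L2[OF i _ s ww] m3 i by (simp add: d1P_eq)
      then show "\<bar>d1P b m s w i\<bar> \<le> nI * L + L" using L(1) nI0 by (smt (verit) mult_nonneg_nonneg)
    qed
    show "near ((nI * L + L) * d) (d1P b m s w) (d1P b m s w')" unfolding near_def
    proof
      fix i assume i: "i \<in> {3..m}"
      have "\<bar>d1P b m s w i - d1P b m s w' i\<bar> \<le> L * d" using L2[OF i _ s w d] m3 i by (simp add: d1P_eq)
      also have "\<dots> \<le> (nI * L + L) * d" using L(1) d0 nI0 by (intro mult_right_mono) auto
      finally show "\<bar>d1P b m s w i - d1P b m s w' i\<bar> \<le> (nI * L + L) * d" .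
    qed
  qed
  then show ?thesis using L(1) by (intro exI[of _ "nI * L + L"]) auto
qed

lemma T_in: "x \<in> {0..R} \<Longrightarrow> T j x \<in> {0..R}"
  using T_nonneg[of x j] T_le[of x j] by auto

lemma ST_bound:
  assumes R: "0 \<le> R" and K: "0 \<le> K"
  shows "\<exists>Bd\<ge>0. \<forall>x\<in>{0..R}. \<forall>W. (\<forall>j\<ge>1. bx K (W j)) \<longrightarrow> (\<forall>j\<ge>1. T j x \<le> del \<longrightarrow> bx eps (W j)) \<longrightarrow>
     (\<forall>k\<ge>1. \<forall>i\<in>{3..m}. \<bar>ST x W k i\<bar> \<le> Bd * q ^ k)"
proof -
  obtain N1 where N1: "\<forall>n\<ge>N1. \<forall>x\<in>{0..R}. T n x \<le> del" using T_small[OF R del_pos] by blast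
  obtain L where L: "L \<ge> 0" "\<forall>s\<in>{0..R}. \<forall>w w' d. bx K w \<longrightarrow> bx K w' \<longrightarrow> near d w w' \<longrightarrow>
     rowb (DP b m s w) L \<and> rowb (\<lambda>i j. DP b m s w i j - DP b m s w' i j) (L * d) \<and>
     bx L (d1P b m s w) \<and> near (L * d) (d1P b m s w) (d1P b m s w')"
    using DP_consts[OF R K] by blast
  have LL: "rowb (DP b m s w) L \<and> bx L (d1P b m s w)" if "s \<in> {0..R}" "bx K w" for s w
  proof -
    have "near 0 w w" unfolding near_def by simp
    then show ?thesis using L(2) that by blast
  qed
  define Lb where "Lb = max L 1"
  define Bd where "Bd = L * (Lb / q) ^ N1 / q"
  have Bd0: "0 \<le> Bd" unfolding Bd_def Lb_def using L by auto
  have "\<bar>ST x W k i\<bar> \<le> Bd * q ^ k"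
    if x: "x \<in> {0..R}" and W1: "\<forall>j\<ge>1. bx K (W j)" and W2: "\<forall>j\<ge>1. T j x \<le> del \<longrightarrow> bx eps (W j)" and k: "k \<ge> 1" and i: "i \<in> {3..m}"
    for x W k i
  proof -
    define c where "c j = (if j < N1 then Lb else q)" for j
    have rc: "rowb (DP b m (T j x) (W j)) (c j) \<and> 0 \<le> c j" if j: "j \<in> {1..<k}" for j
    proof (cases "j < N1")
      case True
      have "rowb (DP b m (T j x) (W j)) L" using LL[OF T_in[OF x]] W1 j by auto
      then show ?thesis using True unfolding c_def Lb_def rowb_def by (auto intro: order_trans)
    next
      case False
      have "T j x \<le> del" "0 \<le> T j x" using N1 False x T_nonneg by auto
      moreover have "bx eps (W j)" using W2 j \<open>T j x \<le> del\<close> by auto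
      ultimately have "rowb (DP b m (T j x) (W j)) q" unfolding rowb_def using DP_row by auto
      then show ?thesis using False unfolding c_def by simp
    qed
    have v: "bx L (d1P b m (T k x) (W k))" using LL[OF T_in[OF x]] W1 k by auto
    have fb: "bx (L * (\<Prod>j\<in>{1..<k}. c j)) (foldr (\<lambda>j w. matvec m (DP b m (T j x) (W j)) w) [1..<k] (d1P b m (T k x) (W k)))"
      using foldr_bx[of k "\<lambda>j. DP b m (T j x) (W j)" c] rc v L(1) by blast
    have pc: "(\<Prod>j\<in>{1..<k}. c j) \<le> (Lb / q) ^ N1 * q ^ (k - 1)"
      by (rule prod_c) (auto simp: c_def Lb_def)
    have dT: "\<bar>deriv (T k) x\<bar> \<le> 1" using x Td_bounds[of x k] by (simp add: deriv_T)
    have "\<bar>ST x W k i\<bar> = \<bar>foldr (\<lambda>j w. matvec m (DP b m (T j x) (W j)) w) [1..<k] (d1P b m (T k x) (W k)) i\<bar> * \<bar>deriv (T k) x\<bar>"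
      unfolding ST_def by (simp add: abs_mult)
    also have "\<dots> \<le> (L * (\<Prod>j\<in>{1..<k}. c j)) * 1"
      using fb i dT unfolding bx_def by (intro mult_mono) auto
    also have "\<dots> \<le> L * ((Lb / q) ^ N1 * q ^ (k - 1))" using pc L(1) by (simp add: mult_left_mono)
    also have "\<dots> = Bd * q ^ k"
    proof -
      have "q ^ k = q ^ (k - 1) * q" using k by (cases k) auto
      then show ?thesis unfolding Bd_def by simp
    qed
    finally show ?thesis .
  qed
  then show ?thesis using Bd0 by blast
qed

lemma ST_lip:
  assumes R: "0 \<le> R" and K: "0 \<le> K"
  shows "\<exists>\<Lambda>. \<forall>k. 0 \<le> \<Lambda> k \<and> (\<forall>x\<in>{0..R}. \<forall>W W' d. 1 \<le> k \<longrightarrow> (\<forall>j\<in>{1..k}. bx K (W j) \<and> bx K (W' j) \<and> near d (W j) (W' j)) \<longrightarrow>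
     (\<forall>i\<in>{3..m}. \<bar>ST x W k i - ST x W' k i\<bar> \<le> \<Lambda> k * d))"
proof -
  obtain L where L: "L \<ge> 0" "\<forall>s\<in>{0..R}. \<forall>w w' d. bx K w \<longrightarrow> bx K w' \<longrightarrow> near d w w' \<longrightarrow>
     rowb (DP b m s w) L \<and> rowb (\<lambda>i j. DP b m s w i j - DP b m s w' i j) (L * d) \<and>
     bx L (d1P b m s w) \<and> near (L * d) (d1P b m s w) (d1P b m s w')"
    using DP_consts[OF R K] by blast
  define Lb where "Lb = max L 1"
  define \<Lambda> where "\<Lambda> k = Lb ^ k * (L + real k * L * L)" for k
  have "\<bar>ST x W k i - ST x W' k i\<bar> \<le> \<Lambda> k * d"
    if x: "x \<in> {0..R}" and k1: "1 \<le> k" and W: "\<forall>j\<in>{1..k}. bx K (W j) \<and> bx K (W' j) \<and> near d (W j) (W' j)" and i: "i \<in> {3..m}"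
    for x W W' d k i
  proof -
    have False: "k \<noteq> 0" using k1 by simp
    have d0: "0 \<le> d" using W False near_nonneg by (metis atLeastAtMost_iff le_refl less_one linorder_not_less)
    have Lj: "rowb (DP b m (T j x) (W j)) L \<and> rowb (DP b m (T j x) (W' j)) L \<and>
       rowb (\<lambda>i l. DP b m (T j x) (W j) i l - DP b m (T j x) (W' j) i l) (L * d)" if "j \<in> {1..k}" for j
    proof -
      have a: "bx K (W j)" "bx K (W' j)" "near d (W j) (W' j)" using W that by auto
      have "near 0 (W' j) (W' j)" unfolding near_def by simp
      then show ?thesis using L(2) T_in[OF x] a by blast
    qed
    have rL: "rowb (A j) Lb \<and> rowb (A' j) Lb \<and> rowb (\<lambda>i l. A j i l - A' j i l) (L * d)"
      if "j \<in> {1..<k}" and "A = (\<lambda>j. DP b m (T j x) (W j))" and "A' = (\<lambda>j. DP b m (T j x) (W' j))" for j A A'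
      using Lj[of j] that unfolding rowb_def Lb_def by (auto intro: order_trans)
    have kk: "k \<in> {1..k}" using False by auto
    have dk: "bx L (d1P b m (T k x) (W k))" "near (L * d) (d1P b m (T k x) (W k)) (d1P b m (T k x) (W' k))"
      using L(2) T_in[OF x] W kk by blast+
    have fd: "near (Lb ^ k * (L * d + real k * (L * d) * L))
        (foldr (\<lambda>j w. matvec m (DP b m (T j x) (W j)) w) [1..<k] (d1P b m (T k x) (W k)))
        (foldr (\<lambda>j w. matvec m (DP b m (T j x) (W' j)) w) [1..<k] (d1P b m (T k x) (W' k)))"
      by (rule foldr_diff[of Lb "L * d" k "\<lambda>j. DP b m (T j x) (W j)" "\<lambda>j. DP b m (T j x) (W' j)"])
         (use rL dk L(1) d0 in \<open>auto simp: Lb_def\<close>)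
    have dT: "\<bar>deriv (T k) x\<bar> \<le> 1" using x Td_bounds[of x k] by (simp add: deriv_T)
    have "\<bar>ST x W k i - ST x W' k i\<bar> = \<bar>foldr (\<lambda>j w. matvec m (DP b m (T j x) (W j)) w) [1..<k] (d1P b m (T k x) (W k)) i
        - foldr (\<lambda>j w. matvec m (DP b m (T j x) (W' j)) w) [1..<k] (d1P b m (T k x) (W' k)) i\<bar> * \<bar>deriv (T k) x\<bar>"
      unfolding ST_def by (simp add: abs_mult[symmetric] left_diff_distrib)
    also have "\<dots> \<le> Lb ^ k * (L * d + real k * (L * d) * L) * 1"
      using fd i dT unfolding near_def by (intro mult_mono) auto
    also have "\<dots> = \<Lambda> k * d" unfolding \<Lambda>_def by (simp add: algebra_simps)
    finally show ?thesis .
  qed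
  moreover have "0 \<le> \<Lambda> k" for k unfolding \<Lambda>_def Lb_def using L(1) by auto
  ultimately show ?thesis by blast
qed

end

context L3 begin

definition Hd :: "real \<Rightarrow> nat \<Rightarrow> real" where
  "Hd x i = (\<Sum>k. series_term b m H (Suc k) x i)"

lemma consts_R:
  assumes R: "0 \<le> R"
  shows "\<exists>K\<ge>eps. (\<forall>x\<in>{0..R}. \<forall>n y. bx eps y \<longrightarrow> bx K (Fcomp b m x n y)) \<and> (\<forall>x\<in>{0..R}. bx K (H x))"
proof -
  obtain K1 where K1: "K1 \<ge> 0" "\<forall>x\<in>{0..R}. \<forall>n y. bx eps y \<longrightarrow> bx K1 (Fcomp b m x n y)" using Fcomp_bound[OF R] by blast
  obtain K2 where K2: "K2 \<ge> 0" "\<forall>x\<in>{0..R}. bx K2 (H x)" using H_bound[OF R] by blast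
  have A: "\<forall>x\<in>{0..R}. \<forall>n y. bx eps y \<longrightarrow> bx (max eps (max K1 K2)) (Fcomp b m x n y)"
  proof (intro ballI allI impI)
    fix x n y assume "x \<in> {0..R}" "bx eps y"
    then have "bx K1 (Fcomp b m x n y)" using K1(2) by blast
    then show "bx (max eps (max K1 K2)) (Fcomp b m x n y)" by (rule bx_mono) simp
  qed
  have B: "\<forall>x\<in>{0..R}. bx (max eps (max K1 K2)) (H x)"
  proof
    fix x assume "x \<in> {0..R}"
    then have "bx K2 (H x)" using K2(2) by blast
    then show "bx (max eps (max K1 K2)) (H x)" by (rule bx_mono) simp
  qed
  show ?thesis using A B by (intro exI[of _ "max eps (max K1 K2)"]) auto
qed

lemma WH_ok:
  assumes x: "x \<in> {0..R}" and K: "\<forall>x\<in>{0..R}. bx K (H x)"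
  shows "\<forall>j\<ge>1. bx K (H (T j x))" "\<forall>j\<ge>1. T j x \<le> del \<longrightarrow> bx eps (H (T j x))"
  using K T_in[OF x] H_small T_nonneg x by auto

lemma Wn_ok:
  assumes x: "x \<in> {0..R}" and y: "bx eps y" and K: "\<forall>x\<in>{0..R}. \<forall>n y. bx eps y \<longrightarrow> bx K (Fcomp b m x n y)"
  shows "\<forall>j\<ge>1. bx K (Fcomp b m (T j x) (n - j) y)" "\<forall>j\<ge>1. T j x \<le> del \<longrightarrow> bx eps (Fcomp b m (T j x) (n - j) y)"
  using K T_in[OF x] y Fcomp_into T_nonneg x by auto

lemma series_bound:
  assumes R: "0 \<le> R"
  shows "\<exists>Bd\<ge>0. \<forall>x\<in>{0..R}. \<forall>i\<in>{3..m}. \<forall>k. \<bar>series_term b m H (Suc k) x i\<bar> \<le> Bd * q ^ (k + 1)"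
proof -
  obtain K where K: "K \<ge> eps" "\<forall>x\<in>{0..R}. \<forall>n y. bx eps y \<longrightarrow> bx K (Fcomp b m x n y)" "\<forall>x\<in>{0..R}. bx K (H x)"
    using consts_R[OF R] by blast
  have K0: "0 \<le> K" using K(1) eps_pos by simp
  obtain Bd where Bd: "Bd \<ge> 0" "\<forall>x\<in>{0..R}. \<forall>W. (\<forall>j\<ge>1. bx K (W j)) \<longrightarrow> (\<forall>j\<ge>1. T j x \<le> del \<longrightarrow> bx eps (W j)) \<longrightarrow>
     (\<forall>k\<ge>1. \<forall>i\<in>{3..m}. \<bar>ST x W k i\<bar> \<le> Bd * q ^ k)" using ST_bound[OF R K0] by blast
  have "\<bar>series_term b m H (Suc k) x i\<bar> \<le> Bd * q ^ (k + 1)" if x: "x \<in> {0..R}" and i: "i \<in> {3..m}" for x i k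
  proof -
    have "\<bar>ST x (\<lambda>j. H (T j x)) (Suc k) i\<bar> \<le> Bd * q ^ Suc k"
      by (rule Bd(2)[rule_format, OF x WH_ok(1)[OF x K(3), rule_format] WH_ok(2)[OF x K(3), rule_format]]) (use i in auto)
    then show ?thesis unfolding series_term_ST by (simp only: Suc_eq_plus1)
  qed
  then show ?thesis using Bd(1) by blast
qed

lemma series_summable: "0 \<le> x \<Longrightarrow> i \<in> {3..m} \<Longrightarrow> summable (\<lambda>k. series_term b m H (Suc k) x i)"
proof -
  assume x: "0 \<le> x" and i: "i \<in> {3..m}"
  obtain Bd where Bd: "Bd \<ge> 0" "\<forall>x'\<in>{0..x}. \<forall>i\<in>{3..m}. \<forall>k. \<bar>series_term b m H (Suc k) x' i\<bar> \<le> Bd * q ^ (k + 1)"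
    using series_bound[OF x] by blast
  show ?thesis
    by (rule summable_comparison_test[OF _ geo_suminf(1)[of Bd 1]]) (use Bd x i in auto)
qed

lemma series_conv:
  assumes R: "0 \<le> R" and e: "0 < e"
  shows "\<exists>N. \<forall>n\<ge>N. \<forall>x\<in>{0..R}. \<forall>i\<in>{3..m}. \<bar>(\<Sum>k=1..n. series_term b m H k x i) - Hd x i\<bar> < e"
proof -
  obtain Bd where Bd: "Bd \<ge> 0" "\<forall>x\<in>{0..R}. \<forall>i\<in>{3..m}. \<forall>k. \<bar>series_term b m H (Suc k) x i\<bar> \<le> Bd * q ^ (k + 1)"
    using series_bound[OF R] by blast
  obtain N where N: "\<forall>k\<ge>N. (4 * Bd * q) * q ^ k < e" using small_pow[of "4 * Bd * q" e] Bd e by auto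
  have "\<bar>(\<Sum>k=1..n. series_term b m H k x i) - Hd x i\<bar> < e" if n: "n \<ge> N" and x: "x \<in> {0..R}" and i: "i \<in> {3..m}" for n x i
  proof -
    define g where "g k = series_term b m H (Suc k) x i" for k
    have sg: "summable g" unfolding g_def using series_summable x i by auto
    have "(\<Sum>k=1..n. series_term b m H k x i) = (\<Sum>k<n. g k)" unfolding g_def by (rule sum_shift1)
    moreover have "Hd x i = (\<Sum>k. g (k + n)) + (\<Sum>k<n. g k)" unfolding Hd_def g_def[symmetric]
      by (rule suminf_split_initial_segment[OF sg])
    ultimately have "\<bar>(\<Sum>k=1..n. series_term b m H k x i) - Hd x i\<bar> = \<bar>\<Sum>k. g (k + n)\<bar>" by simp
    also have "\<dots> \<le> (\<Sum>k. Bd * q ^ (k + (n + 1)))"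
      using Bd(2) x i unfolding g_def
      by (intro norm_suminf_le[where f="\<lambda>k. g (k + n)", unfolded real_norm_def g_def] geo_suminf(1)) (simp add: algebra_simps)
    also have "\<dots> = 4 * Bd * q ^ (n + 1)" by (rule geo_suminf(2))
    also have "\<dots> = (4 * Bd * q) * q ^ n" by simp
    also have "\<dots> < e" using N n by blast
    finally show ?thesis .
  qed
  then show ?thesis by blast
qed

lemma Dn_conv:
  assumes R: "0 \<le> R" and e: "0 < e"
  shows "\<exists>N. \<forall>n\<ge>N. \<forall>x\<in>{0..R}. \<forall>y. bx eps y \<longrightarrow> (\<forall>i\<in>{3..m}. \<bar>Dn x n y i - Hd x i\<bar> < e)"
proof -
  obtain K where K: "K \<ge> eps" "\<forall>x\<in>{0..R}. \<forall>n y. bx eps y \<longrightarrow> bx K (Fcomp b m x n y)" "\<forall>x\<in>{0..R}. bx K (H x)"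
    using consts_R[OF R] by blast
  have K0: "0 \<le> K" using K(1) eps_pos by simp
  obtain Bd where Bd: "Bd \<ge> 0" "\<forall>x\<in>{0..R}. \<forall>W. (\<forall>j\<ge>1. bx K (W j)) \<longrightarrow> (\<forall>j\<ge>1. T j x \<le> del \<longrightarrow> bx eps (W j)) \<longrightarrow>
     (\<forall>k\<ge>1. \<forall>i\<in>{3..m}. \<bar>ST x W k i\<bar> \<le> Bd * q ^ k)" using ST_bound[OF R K0] by blast
  obtain \<Lambda> where \<Lambda>: "\<forall>k. 0 \<le> \<Lambda> k \<and> (\<forall>x\<in>{0..R}. \<forall>W W' d. 1 \<le> k \<longrightarrow> (\<forall>j\<in>{1..k}. bx K (W j) \<and> bx K (W' j) \<and> near d (W j) (W' j)) \<longrightarrow>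
     (\<forall>i\<in>{3..m}. \<bar>ST x W k i - ST x W' k i\<bar> \<le> \<Lambda> k * d))" using ST_lip[OF R K0] by blast
  obtain N0 C where NC: "0 \<le> C" "\<forall>x\<in>{0..R}. \<forall>k w. bx eps w \<longrightarrow> near (C * q ^ k) (Fcomp b m x (N0 + k) w) (H x)"
    using H_lim_conv[OF R] by blast
  have e3: "0 < e / 3" using e by simp
  obtain K0 where K0': "\<forall>k\<ge>K0. (4 * Bd * q) * q ^ k < e / 3" using small_pow[of "4 * Bd * q" "e/3"] Bd e3 by auto
  then have tail: "4 * Bd * q ^ (K0 + 1) < e / 3" by simp
  define \<Lambda>s where "\<Lambda>s = (\<Sum>k\<le>K0. \<Lambda> k)"
  have \<Lambda>s: "\<Lambda> k \<le> \<Lambda>s" if "k \<le> K0" for k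
    unfolding \<Lambda>s_def using that \<Lambda> by (intro member_le_sum) auto
  have \<Lambda>s0: "0 \<le> \<Lambda>s" unfolding \<Lambda>s_def using \<Lambda> by (intro sum_nonneg) auto
  obtain k1 where k1: "\<forall>k\<ge>k1. (real K0 * \<Lambda>s * C) * q ^ k < e / 3"
    using small_pow[of "real K0 * \<Lambda>s * C" "e/3"] \<Lambda>s0 NC(1) e3 by auto
  have main: "\<bar>Dn x n y i - Hd x i\<bar> < e"
    if n: "n \<ge> K0 + N0 + k1" and x: "x \<in> {0..R}" and y: "bx eps y" and i: "i \<in> {3..m}" for n x y i
  proof -
    define WH where "WH j = H (T j x)" for j
    define Wn where "Wn j = Fcomp b m (T j x) (n - j) y" for j
    define gH where "gH k = ST x WH (Suc k) i" for k
    define gn where "gn k = ST x Wn (Suc k) i" for k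
    have okH: "\<forall>j\<ge>1. bx K (WH j)" "\<forall>j\<ge>1. T j x \<le> del \<longrightarrow> bx eps (WH j)"
      unfolding WH_def using WH_ok[OF x K(3)] by auto
    have okn: "\<forall>j\<ge>1. bx K (Wn j)" "\<forall>j\<ge>1. T j x \<le> del \<longrightarrow> bx eps (Wn j)"
      unfolding Wn_def using Wn_ok[OF x y K(2)] by auto
    have bH: "\<bar>gH k\<bar> \<le> Bd * q ^ (k + 1)" for k
    proof -
      have "\<bar>ST x WH (Suc k) i\<bar> \<le> Bd * q ^ Suc k"
        by (rule Bd(2)[rule_format, OF x okH(1)[rule_format] okH(2)[rule_format]]) (use i in auto)
      then show ?thesis unfolding gH_def by (simp only: Suc_eq_plus1)
    qed
    have bn: "\<bar>gn k\<bar> \<le> Bd * q ^ (k + 1)" for k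
    proof -
      have "\<bar>ST x Wn (Suc k) i\<bar> \<le> Bd * q ^ Suc k"
        by (rule Bd(2)[rule_format, OF x okn(1)[rule_format] okn(2)[rule_format]]) (use i in auto)
      then show ?thesis unfolding gn_def by (simp only: Suc_eq_plus1)
    qed
    have sH: "summable gH" by (rule summable_comparison_test[OF _ geo_suminf(1)[of Bd 1]]) (use bH in auto)
    have HdgH: "Hd x i = suminf gH" unfolding Hd_def gH_def WH_def series_term_ST ..
    have Dngn: "Dn x n y i = (\<Sum>k<n. gn k)" unfolding Dn_def gn_def Wn_def by (rule sum_shift1)
    have nK0: "K0 \<le> n" using n by simp
    have split1: "(\<Sum>k<n. gn k) = (\<Sum>k<K0. gn k) + (\<Sum>k\<in>{K0..<n}. gn k)"
      using sum.atLeastLessThan_concat[of 0 K0 n gn] nK0 by (simp add: lessThan_atLeast0)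
    have split2: "suminf gH = (\<Sum>k. gH (k + K0)) + (\<Sum>k<K0. gH k)" by (rule suminf_split_initial_segment[OF sH])
    define dd where "dd = C * q ^ (n - K0 - N0)"
    have near_j: "near dd (Wn j) (WH j)" if j: "j \<in> {1..K0}" for j
    proof -
      have eq: "n - j = N0 + (n - j - N0)" using n j by auto
      have "near (C * q ^ (n - j - N0)) (Fcomp b m (T j x) (N0 + (n - j - N0)) y) (H (T j x))"
        using NC(2) T_in[OF x] y by blast
      moreover have "C * q ^ (n - j - N0) \<le> dd" unfolding dd_def
        using NC(1) j by (intro mult_left_mono power_decreasing) auto
      ultimately show ?thesis unfolding Wn_def WH_def using eq by (metis near_mono)
    qed
    have d1: "\<bar>gn k - gH k\<bar> \<le> \<Lambda>s * dd" if k: "k < K0" for k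
    proof -
      have h: "\<forall>j\<in>{1..Suc k}. bx K (Wn j) \<and> bx K (WH j) \<and> near dd (Wn j) (WH j)"
        using okn okH near_j k by auto
      have LL: "\<forall>x\<in>{0..R}. \<forall>W W' d. 1 \<le> Suc k \<longrightarrow> (\<forall>j\<in>{1..Suc k}. bx K (W j) \<and> bx K (W' j) \<and> near d (W j) (W' j)) \<longrightarrow>
         (\<forall>i\<in>{3..m}. \<bar>ST x W (Suc k) i - ST x W' (Suc k) i\<bar> \<le> \<Lambda> (Suc k) * d)" using \<Lambda> by blast
      have "\<bar>gn k - gH k\<bar> \<le> \<Lambda> (Suc k) * dd" unfolding gn_def gH_def
        by (rule LL[rule_format, OF x _ h[rule_format] i]) simp
      also have "\<dots> \<le> \<Lambda>s * dd" using \<Lambda>s[of "Suc k"] k NC(1) unfolding dd_def by (intro mult_right_mono) auto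
      finally show ?thesis .
    qed
    have A: "\<bar>(\<Sum>k<K0. gn k) - (\<Sum>k<K0. gH k)\<bar> < e / 3"
    proof -
      have "\<bar>(\<Sum>k<K0. gn k) - (\<Sum>k<K0. gH k)\<bar> \<le> (\<Sum>k<K0. \<bar>gn k - gH k\<bar>)"
        by (simp add: sum_subtractf[symmetric] sum_abs)
      also have "\<dots> \<le> (\<Sum>k<K0. \<Lambda>s * dd)" using d1 by (intro sum_mono) auto
      also have "\<dots> = (real K0 * \<Lambda>s * C) * q ^ (n - K0 - N0)" unfolding dd_def by simp
      also have "\<dots> < e / 3" using k1 n by auto
      finally show ?thesis .
    qed
    have B: "\<bar>\<Sum>k\<in>{K0..<n}. gn k\<bar> < e / 3"
    proof -
      have "\<bar>\<Sum>k\<in>{K0..<n}. gn k\<bar> \<le> (\<Sum>k\<in>{K0..<n}. Bd * q ^ (k + 1))"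
        by (rule order_trans[OF sum_abs]) (intro sum_mono bn)
      also have "\<dots> = Bd * (\<Sum>k\<in>{K0..<n}. q ^ (k + 1))" by (simp add: sum_distrib_left)
      also have "\<dots> \<le> Bd * (4 * q ^ (K0 + 1))" using Bd(1) by (intro mult_left_mono geo_sum_le)
      also have "\<dots> < e / 3" using tail by simp
      finally show ?thesis .
    qed
    have Ct: "\<bar>\<Sum>k. gH (k + K0)\<bar> < e / 3"
    proof -
      have bH': "\<bar>gH (k + K0)\<bar> \<le> Bd * q ^ (k + (K0 + 1))" for k
        using bH[of "k + K0"] by (simp only: add.assoc)
      have "\<bar>\<Sum>k. gH (k + K0)\<bar> \<le> (\<Sum>k. Bd * q ^ (k + (K0 + 1)))"
        using bH' by (intro norm_suminf_le[where f="\<lambda>k. gH (k + K0)", unfolded real_norm_def] geo_suminf(1))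
      also have "\<dots> = 4 * Bd * q ^ (K0 + 1)" by (rule geo_suminf(2))
      also have "\<dots> < e / 3" using tail .
      finally show ?thesis .
    qed
    have "Dn x n y i - Hd x i = ((\<Sum>k<K0. gn k) - (\<Sum>k<K0. gH k)) + (\<Sum>k\<in>{K0..<n}. gn k) - (\<Sum>k. gH (k + K0))"
      unfolding Dngn HdgH split1 split2 by simp
    then show ?thesis using A B Ct by linarith
  qed
  show ?thesis using main by blast
qed

end


context L3 begin

lemma H_deriv:
  assumes x0: "0 \<le> x0" and i: "i \<in> {3..m}"
  shows "((\<lambda>t. H t i) has_real_derivative Hd x0 i) (at x0 within {0..})"
proof -
  define R where "R = x0 + 1"
  have R: "0 \<le> R" unfolding R_def using x0 by simp
  define S where "S = {0..R}"
  have z: "bx eps (\<lambda>_. 0)" using eps_pos by (intro bx_zero) auto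
  have derf: "((\<lambda>t. Fcomp b m t n (\<lambda>_. 0) i) has_derivative (\<lambda>h. Dn t n (\<lambda>_. 0) i * h)) (at t within S)"
    if t: "t \<in> S" for n t
  proof -
    have "((\<lambda>t. Fcomp b m t n (\<lambda>_. 0) i) has_real_derivative Dn t n (\<lambda>_. 0) i) (at t within S)"
    proof -
      have t0: "0 \<le> t" using t unfolding S_def by simp
      show ?thesis by (rule has_field_derivative_at_within[OF Fcomp_deriv[OF t0 i]])
    qed
    then show ?thesis by (simp add: has_field_derivative_def mult.commute[of _ "Dn t n (\<lambda>_. 0) i"])
  qed
  have nle: "\<forall>\<^sub>F n in sequentially. \<forall>t\<in>S. \<forall>h. norm (Dn t n (\<lambda>_. 0) i * h - Hd t i * h) \<le> e * norm h"
    if e: "e > 0" for e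
  proof -
    obtain N where N: "\<forall>n\<ge>N. \<forall>x\<in>{0..R}. \<forall>y. bx eps y \<longrightarrow> (\<forall>i\<in>{3..m}. \<bar>Dn x n y i - Hd x i\<bar> < e)"
      using Dn_conv[OF R e] by blast
    have "\<forall>t\<in>S. \<forall>h. norm (Dn t n (\<lambda>_. 0) i * h - Hd t i * h) \<le> e * norm h" if n: "n \<ge> N" for n
    proof (intro ballI allI)
      fix t h assume t: "t \<in> S"
      have "\<bar>Dn t n (\<lambda>_. 0) i - Hd t i\<bar> < e" using N n t z i unfolding S_def by blast
      then have "\<bar>Dn t n (\<lambda>_. 0) i - Hd t i\<bar> * \<bar>h\<bar> \<le> e * \<bar>h\<bar>" by (intro mult_right_mono) auto
      then show "norm (Dn t n (\<lambda>_. 0) i * h - Hd t i * h) \<le> e * norm h"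
        by (simp add: abs_mult[symmetric] left_diff_distrib)
    qed
    then show ?thesis unfolding eventually_sequentially by blast
  qed
  have S0: "0 \<in> S" unfolding S_def using R by simp
  have lim0: "(\<lambda>n. Fcomp b m 0 n (\<lambda>_. 0) i) \<longlonglongrightarrow> H 0 i" using H_lim[of 0 i] i by simp
  obtain g where g: "\<forall>t\<in>S. (\<lambda>n. Fcomp b m t n (\<lambda>_. 0) i) \<longlonglongrightarrow> g t \<and> (g has_derivative (\<lambda>h. Hd t i * h)) (at t within S)"
    using has_derivative_sequence[of S "\<lambda>n t. Fcomp b m t n (\<lambda>_. 0) i" "\<lambda>n t h. Dn t n (\<lambda>_. 0) i * h" "\<lambda>t h. Hd t i * h", OF _ derf nle S0 lim0]
    unfolding S_def by (auto simp: convex_real_interval)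
  have gH: "g t = H t i" if t: "t \<in> S" for t
    using g t H_lim[of t i] i unfolding S_def by (auto intro: LIMSEQ_unique)
  have x0S: "x0 \<in> S" unfolding S_def R_def using x0 by simp
  have "((\<lambda>t. H t i) has_derivative (\<lambda>h. Hd x0 i * h)) (at x0 within S)"
  proof (rule has_derivative_transform_within[where f=g, OF _ zero_less_one x0S])
    show "(g has_derivative (\<lambda>h. Hd x0 i * h)) (at x0 within S)" using g x0S by blast
    show "\<And>x'. x' \<in> S \<Longrightarrow> dist x' x0 < 1 \<Longrightarrow> g x' = H x' i" using gH by blast
  qed
  moreover have "at x0 within S = at x0 within {0..}"
    by (rule at_within_nhd[of x0 "{..<R}"]) (auto simp: S_def R_def)
  ultimately show ?thesis by (simp add: has_field_derivative_def mult.commute[of _ "Hd x0 i"])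
qed

end

theorem lemma3p2:
  fixes b m :: nat
  assumes "b \<ge> 2" and "m \<ge> 3"
  shows "\<exists>\<epsilon>>0. \<exists>H :: real \<Rightarrow> nat \<Rightarrow> real. \<exists>H' :: real \<Rightarrow> nat \<Rightarrow> real.
    \<comment> \<open>(i) uniform convergence of F_1 o ... o F_n (y) to H(x), independent of y\<close>
    (\<forall>R\<ge>0. \<forall>e>0. \<exists>N. \<forall>n\<ge>N. \<forall>x\<in>{0..R}. \<forall>y. (\<forall>i\<in>{3..m}. \<bar>y i\<bar> \<le> \<epsilon>) \<longrightarrow>
        (\<forall>i\<in>{3..m}. \<bar>Fcomp b m x n y i - H x i\<bar> < e)) \<and>
    \<comment> \<open>(ii)\<close>
    (\<forall>x\<ge>0. H x m \<ge> 0) \<and> mono_on {0..} (\<lambda>x. H x m) \<and> H 0 m = 0 \<and>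
    filterlim (\<lambda>x. H x m) at_top at_top \<and>
    \<comment> \<open>(iii)\<close>
    (\<forall>x\<ge>0. \<forall>i\<in>{3..m}. H (Mb b x) i = Pvec b m x (H x) i) \<and>
    \<comment> \<open>(iv) differentiability, derivative H' given by the uniformly convergent series\<close>
    (\<forall>x\<ge>0. \<forall>i\<in>{3..m}. ((\<lambda>t. H t i) has_real_derivative H' x i) (at x within {0..})) \<and>
    (\<forall>R\<ge>0. \<forall>e>0. \<exists>N. \<forall>n\<ge>N. \<forall>x\<in>{0..R}. \<forall>i\<in>{3..m}.
        \<bar>(\<Sum>k=1..n. series_term b m H k x i) - H' x i\<bar> < e) \<and>
    \<comment> \<open>(v) derivatives of the compositions converge uniformly to H'\<close>
    (\<forall>R\<ge>0. \<forall>e>0. \<exists>N. \<forall>n\<ge>N. \<forall>x\<in>{0..R}. \<forall>y. (\<forall>i\<in>{3..m}. \<bar>y i\<bar> \<le> \<epsilon>) \<longrightarrow>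
        (\<forall>i\<in>{3..m}. \<bar>deriv (\<lambda>t. Fcomp b m t n y i) x - H' x i\<bar> < e))"
proof -
  interpret L3 b m using assms by unfold_locales
  have m_in: "m \<in> {3..m}" using assms by simp
  have i: "\<forall>R\<ge>0. \<forall>e>0. \<exists>N. \<forall>n\<ge>N. \<forall>x\<in>{0..R}. \<forall>y. (\<forall>i\<in>{3..m}. \<bar>y i\<bar> \<le> eps) \<longrightarrow>
        (\<forall>i\<in>{3..m}. \<bar>Fcomp b m x n y i - H x i\<bar> < e)"
  proof (intro allI impI)
    fix R e :: real assume R: "R \<ge> 0" and e: "e > 0"
    obtain N0 C where NC: "0 \<le> C" "\<forall>x\<in>{0..R}. \<forall>k w. bx eps w \<longrightarrow> near (C * q ^ k) (Fcomp b m x (N0 + k) w) (H x)"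
      using H_lim_conv[OF R] by blast
    obtain k0 where k0: "\<forall>k\<ge>k0. C * q ^ k < e" using small_pow[OF NC(1) e] by blast
    have "\<bar>Fcomp b m x n y i - H x i\<bar> < e"
      if n: "n \<ge> N0 + k0" and x: "x \<in> {0..R}" and y: "\<forall>i\<in>{3..m}. \<bar>y i\<bar> \<le> eps" and i: "i \<in> {3..m}" for n x y i
    proof -
      have yb: "bx eps y" using y unfolding bx_def .
      have eq: "n = N0 + (n - N0)" using n by simp
      have "near (C * q ^ (n - N0)) (Fcomp b m x (N0 + (n - N0)) y) (H x)" using NC(2) x yb by blast
      then have "\<bar>Fcomp b m x n y i - H x i\<bar> \<le> C * q ^ (n - N0)" using i eq unfolding near_def by metis
      also have "\<dots> < e" using k0 n by auto
      finally show ?thesis .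
    qed
    then show "\<exists>N. \<forall>n\<ge>N. \<forall>x\<in>{0..R}. \<forall>y. (\<forall>i\<in>{3..m}. \<bar>y i\<bar> \<le> eps) \<longrightarrow>
        (\<forall>i\<in>{3..m}. \<bar>Fcomp b m x n y i - H x i\<bar> < e)" by blast
  qed
  have ii1: "\<forall>x\<ge>0. H x m \<ge> 0" using H_nonneg m_in by auto
  have ii2: "mono_on {0..} (\<lambda>x. H x m)" by (rule mono_onI) (use H_mono m_in in auto)
  have ii3: "H 0 m = 0" by (rule H_zero)
  have iii: "\<forall>x\<ge>0. \<forall>i\<in>{3..m}. H (Mb b x) i = Pvec b m x (H x) i" using H_rec by auto
  have iv1: "\<forall>x\<ge>0. \<forall>i\<in>{3..m}. ((\<lambda>t. H t i) has_real_derivative Hd x i) (at x within {0..})"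
    using H_deriv by auto
  have iv2: "\<forall>R\<ge>0. \<forall>e>0. \<exists>N. \<forall>n\<ge>N. \<forall>x\<in>{0..R}. \<forall>i\<in>{3..m}.
        \<bar>(\<Sum>k=1..n. series_term b m H k x i) - Hd x i\<bar> < e"
    using series_conv by blast
  have v: "\<forall>R\<ge>0. \<forall>e>0. \<exists>N. \<forall>n\<ge>N. \<forall>x\<in>{0..R}. \<forall>y. (\<forall>i\<in>{3..m}. \<bar>y i\<bar> \<le> eps) \<longrightarrow>
        (\<forall>i\<in>{3..m}. \<bar>deriv (\<lambda>t. Fcomp b m t n y i) x - Hd x i\<bar> < e)"
  proof (intro allI impI)
    fix R e :: real assume R: "R \<ge> 0" and e: "e > 0"
    obtain N where N: "\<forall>n\<ge>N. \<forall>x\<in>{0..R}. \<forall>y. bx eps y \<longrightarrow> (\<forall>i\<in>{3..m}. \<bar>Dn x n y i - Hd x i\<bar> < e)"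
      using Dn_conv[OF R e] by blast
    have "\<bar>deriv (\<lambda>t. Fcomp b m t n y i) x - Hd x i\<bar> < e"
      if n: "n \<ge> N" and x: "x \<in> {0..R}" and y: "\<forall>i\<in>{3..m}. \<bar>y i\<bar> \<le> eps" and i: "i \<in> {3..m}" for n x y i
    proof -
      have yb: "bx eps y" using y unfolding bx_def .
      have "deriv (\<lambda>t. Fcomp b m t n y i) x = Dn x n y i" using x i by (intro Fcomp_deriv_eq) auto
      then show ?thesis using N n x yb i by auto
    qed
    then show "\<exists>N. \<forall>n\<ge>N. \<forall>x\<in>{0..R}. \<forall>y. (\<forall>i\<in>{3..m}. \<bar>y i\<bar> \<le> eps) \<longrightarrow>
        (\<forall>i\<in>{3..m}. \<bar>deriv (\<lambda>t. Fcomp b m t n y i) x - Hd x i\<bar> < e)" by blast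
  qed
  show ?thesis
    apply (rule exI[of _ eps])
    apply (intro conjI eps_pos)
    apply (rule exI[of _ H])
    apply (rule exI[of _ Hd])
    using i ii1 ii2 ii3 H_m_top iii iv1 iv2 v by blast
qed


end
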